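(* Assume the standing setup, fix $\omega\in\Omega$ and $(\hat x_0,\hat y_0)\in\mathbb{R}^n\times\mathbb{R}^m$, and let $\eta>0$ with $b<\eta<a$ satisfy $\rho:=\frac{K}{a-\eta}+\frac{K}{\eta-b}<1$. Then for every $u_0\in\mathbb{R}^n$ the integral system $$u(t)=e^{At+\int_0^t z(\theta_\tau\omega)d\tau}u_0+\int_0^t e^{A(t-s)+\int_s^t z(\theta_\tau\omega)d\tau}\Delta F(u(s),v(s),\theta_s\omega)\,ds,\quad v(t)=\int_{-\infty}^t e^{B(t-s)+\int_s^t z(\theta_\tau\omega)d\tau}\Delta G(u(s),v(s),\theta_s\omega)\,ds,\quad t\le 0,$$ has a unique solution $\phi(\cdot)=\phi(\cdot,\omega,(\hat x_0,\hat y_0);u_0)=(u,v)$ in $C^-_\eta$.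
   Context: Standing setup: $1<\alpha<2$; $\Omega$ is a $\{\theta_t\}$-invariant full-measure set of càdlàg paths $\omega:\mathbb{R}\to\mathbb{R}$ ($\omega(0)=0$) of a two-sided scalar symmetric $\alpha$-stable Lévy motion, with $\theta_t\omega=\omega(\cdot+t)-\omega(t)$, on which $z(\omega)=-\int_{-\infty}^0e^\tau\omega(\tau)d\tau$ exists, $t\mapsto z(\theta_t\omega)$ is càdlàg, $\lim_{t\to\pm\infty}|z(\theta_t\omega)|/|t|=0$ and $\lim_{t\to\pm\infty}\frac1t\int_0^tz(\theta_\tau\omega)d\tau=0$. (A1) $A$ is a real $n\times n$ matrix and $B$ a real $m\times m$ matrix with $|e^{At}x|\le e^{at}|x|$ for $t\le0$ and $|e^{Bt}y|\le e^{bt}|y|$ for $t\ge 0$, where $b<0<a$. (A2) $f:\mathbb{R}^n\times\mathbb{R}^m\to\mathbb{R}^n$, $g:\mathbb{R}^n\times\mathbb{R}^m\to\mathbb{R}^m$ satisfy $f(0,0)=0$, $g(0,0)=0$, $|f(x_1,y_1)-f(x_2,y_2)|\le K(|x_1-x_2|+|y_1-y_2|)$ and the same for $g$. Put $F(x,y,\omega)=e^{-z(\omega)}f(e^{z(\omega)}x,e^{z(\omega)}y)$, $G(x,y,\omega)=e^{-z(\omega)}g(e^{z(\omega)}x,e^{z(\omega)}y)$. The random system (RDE) is $\frac{d\hat x}{dt}=A\hat x+F(\hat x,\hat y,\theta_t\omega)+z(\theta_t\omega)\hat x$, $\frac{d\hat y}{dt}=B\hat y+G(\hat x,\hat y,\theta_t\omega)+z(\theta_t\omega)\hat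 y$; $\varphi(t,\omega,(\hat x_0,\hat y_0))=(\hat x(t),\hat y(t))$ denotes its (Carathéodory) solution, defined for all $t\in\mathbb{R}$, with $(\hat x(0),\hat y(0))=(\hat x_0,\hat y_0)$. $|\cdot|$ is the Euclidean norm. For fixed $\omega$ and $\eta\in\mathbb{R}$, $C^-_\eta$ is the Banach space of continuous $\phi=(u,v):(-\infty,0]\to\mathbb{R}^n\times\mathbb{R}^m$ with $\|\phi\|_{C^-_\eta}=\sup_{t\le0}e^{-\eta t-\int_0^tz(\theta_\tau\omega)d\tau}|u(t)|+\sup_{t\le0}e^{-\eta t-\int_0^tz(\theta_\tau\omega)d\tau}|v(t)|<\infty$. Given a base point $(\hat x_0,\hat y_0)$ with orbit $(\hat x(t),\hat y(t))=\varphi(t,\omega,(\hat x_0,\hat y_0))$, define $\Delta F(u,v,\theta_t\omega)=F(u+\hat x(t),v+\hat y(t),\theta_t\omega)-F(\hat x(t),\hat y(t),\theta_t\omega)$ and $\Delta G$ analogously with $G$. *)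

theory Defs
  imports "HOL-Analysis.Analysis"
begin

text \<open>Powers and exponential of a real square matrix (real^'n^'n).\<close>
primrec matpow :: "real^'n^'n \<Rightarrow> nat \<Rightarrow> real^'n^'n" where
  "matpow M 0 = mat 1"
| "matpow M (Suc k) = M ** matpow M k"

definition mexp :: "real^'n^'n \<Rightarrow> real^'n^'n" where
  "mexp M = (\<Sum>k. (1 / (fact k :: real)) *\<^sub>R matpow M k)"

text \<open>Oriented integral over [a,b]: for b < a it is minus the integral over [b,a].\<close>
definition oint :: "real \<Rightarrow> real \<Rightarrow> (real \<Rightarrow> 'a::euclidean_space) \<Rightarrow> 'a" where
  "oint a b g = (if a \<le> b then integral {a..b} g else - integral {b..a} g)"

text \<open>cadlag: right-continuous with left limits everywhere.\<close>
definition cadlag :: "(real \<Rightarrow> real) \<Rightarrow> bool" where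
  "cadlag g \<longleftrightarrow> (\<forall>t. continuous (at_right t) g \<and> (\<exists>l. (g \<longlongrightarrow> l) (at_left t)))"

text \<open>Wiener shift on paths and the stationary variable z.\<close>
definition theta :: "real \<Rightarrow> (real \<Rightarrow> real) \<Rightarrow> (real \<Rightarrow> real)" where
  "theta t w = (\<lambda>s. w (s + t) - w t)"

definition zv :: "(real \<Rightarrow> real) \<Rightarrow> real" where
  "zv w = - integral {..0} (\<lambda>\<tau>. exp \<tau> * w \<tau>)"

text \<open>Standing assumptions on a path w belonging to Omega (properties used for fixed w).\<close>
definition in_Omega :: "(real \<Rightarrow> real) \<Rightarrow> bool" where
  "in_Omega w \<longleftrightarrow>
     w 0 = 0 \<and> cadlag w \<and>
     (\<forall>t. (\<lambda>\<tau>. exp \<tau> * theta t w \<tau>) integrable_on {..0}) \<and>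
     cadlag (\<lambda>t. zv (theta t w)) \<and>
     ((\<lambda>t. \<bar>zv (theta t w)\<bar> / \<bar>t\<bar>) \<longlongrightarrow> 0) at_top \<and>
     ((\<lambda>t. \<bar>zv (theta t w)\<bar> / \<bar>t\<bar>) \<longlongrightarrow> 0) at_bot \<and>
     ((\<lambda>t. oint 0 t (\<lambda>\<tau>. zv (theta \<tau> w)) / t) \<longlongrightarrow> 0) at_top \<and>
     ((\<lambda>t. oint 0 t (\<lambda>\<tau>. zv (theta \<tau> w)) / t) \<longlongrightarrow> 0) at_bot"

text \<open>Transformed nonlinearities F, G.\<close>
definition Ftr :: "('x::real_normed_vector \<Rightarrow> 'y::real_normed_vector \<Rightarrow> 'r::real_normed_vector)
    \<Rightarrow> 'x \<Rightarrow> 'y \<Rightarrow> (real \<Rightarrow> real) \<Rightarrow> 'r" where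
  "Ftr f x y w = exp (- zv w) *\<^sub>R f (exp (zv w) *\<^sub>R x) (exp (zv w) *\<^sub>R y)"

text \<open>Z w t = integral from 0 to t of z(theta_tau w).\<close>
definition Zint :: "(real \<Rightarrow> real) \<Rightarrow> real \<Rightarrow> real" where
  "Zint w t = oint 0 t (\<lambda>\<tau>. zv (theta \<tau> w))"

text \<open>(xh, yh) is a (Caratheodory, integral-form) solution of the RDE on all of R.\<close>
definition rde_solution ::
  "real^'n^'n \<Rightarrow> real^'m^'m \<Rightarrow> (real^'n \<Rightarrow> real^'m \<Rightarrow> real^'n) \<Rightarrow> (real^'n \<Rightarrow> real^'m \<Rightarrow> real^'m)
   \<Rightarrow> (real \<Rightarrow> real) \<Rightarrow> (real \<Rightarrow> real^'n) \<Rightarrow> (real \<Rightarrow> real^'m) \<Rightarrow> bool" where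
  "rde_solution A B f g w xh yh \<longleftrightarrow>
     continuous_on UNIV xh \<and> continuous_on UNIV yh \<and>
     (\<forall>s t. s \<le> t \<longrightarrow>
        ((\<lambda>\<tau>. A *v xh \<tau> + Ftr f (xh \<tau>) (yh \<tau>) (theta \<tau> w) + zv (theta \<tau> w) *\<^sub>R xh \<tau>)
           has_integral (xh t - xh s)) {s..t} \<and>
        ((\<lambda>\<tau>. B *v yh \<tau> + Ftr g (xh \<tau>) (yh \<tau>) (theta \<tau> w) + zv (theta \<tau> w) *\<^sub>R yh \<tau>)
           has_integral (yh t - yh s)) {s..t})"

text \<open>Membership in C^-_eta (continuity on (-inf,0] and finiteness of the weighted sup norm).\<close>
definition in_Cminus :: "real \<Rightarrow> (real \<Rightarrow> real) \<Rightarrow> (real \<Rightarrow> real^'n) \<Rightarrow> (real \<Rightarrow> real^'m) \<Rightarrow> bool" where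
  "in_Cminus \<eta> w u v \<longleftrightarrow>
     continuous_on {..0} u \<and> continuous_on {..0} v \<and>
     bdd_above ((\<lambda>t. exp (- \<eta> * t - Zint w t) * norm (u t)) ` {..0}) \<and>
     bdd_above ((\<lambda>t. exp (- \<eta> * t - Zint w t) * norm (v t)) ` {..0})"

text \<open>The integral system of Lemma 4.2 on t \<le> 0 (with Delta F, Delta G along the base orbit).\<close>
definition solves_lemma_system ::
  "real^'n^'n \<Rightarrow> real^'m^'m \<Rightarrow> (real^'n \<Rightarrow> real^'m \<Rightarrow> real^'n) \<Rightarrow> (real^'n \<Rightarrow> real^'m \<Rightarrow> real^'m)
   \<Rightarrow> (real \<Rightarrow> real) \<Rightarrow> (real \<Rightarrow> real^'n) \<Rightarrow> (real \<Rightarrow> real^'m) \<Rightarrow> real^'n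
   \<Rightarrow> (real \<Rightarrow> real^'n) \<Rightarrow> (real \<Rightarrow> real^'m) \<Rightarrow> bool" where
  "solves_lemma_system A B f g w xh yh u0 u v \<longleftrightarrow>
     (let dF = (\<lambda>s. Ftr f (u s + xh s) (v s + yh s) (theta s w) - Ftr f (xh s) (yh s) (theta s w));
          dG = (\<lambda>s. Ftr g (u s + xh s) (v s + yh s) (theta s w) - Ftr g (xh s) (yh s) (theta s w))
      in \<forall>t\<le>0.
        ((\<lambda>s. exp (Zint w t - Zint w s) *\<^sub>R (mexp ((t - s) *\<^sub>R A) *v dF s))
            has_integral (exp (Zint w t) *\<^sub>R (mexp (t *\<^sub>R A) *v u0) - u t)) {t..0} \<and>
        ((\<lambda>s. exp (Zint w t - Zint w s) *\<^sub>R (mexp ((t - s) *\<^sub>R B) *v dG s))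
            has_integral v t) {..t})"

end

theory Submission
  imports Defs
begin

(* ---- Mexp ---- *)


lemma matpow_scale: "matpow (t *\<^sub>R M) k = (t^k) *\<^sub>R matpow M k"
  by (induction k) (auto simp: matrix_scalar_ac scalar_matrix_assoc[symmetric])

lemma matpow_add: "matpow M p ** matpow M q = matpow M (p+q)"
  by (induction p) (auto simp: matrix_mul_assoc[symmetric])

lemma onorm_matpow: "onorm ((*v) (matpow (M::real^'n^'n) k)) \<le> onorm ((*v) M) ^ k"
proof (induction k)
  case 0
  have "(*v) (mat 1 :: real^'n^'n) = (\<lambda>x. x)" by (auto simp: matrix_vector_mul_lid)
  then show ?case using onorm_id_le by simp
next
  case (Suc k)
  have e: "(*v) (M ** matpow M k) = (*v) M \<circ> (*v) (matpow M k)"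
    by (auto simp: matrix_vector_mul_assoc)
  have "onorm ((*v) (M ** matpow M k)) \<le> onorm ((*v) M) * onorm ((*v) (matpow M k))"
    unfolding e by (rule onorm_compose) auto
  also have "\<dots> \<le> onorm ((*v) M) * onorm ((*v) M) ^ k"
    by (rule mult_left_mono[OF Suc]) (auto intro: onorm_pos_le)
  finally show ?case by simp
qed

lemma norm_le_mx: "norm (X::real^'n^'m) \<le> (\<Sum>i\<in>UNIV. \<Sum>j\<in>UNIV. \<bar>X$i$j\<bar>)"
proof -
  have "norm X \<le> (\<Sum>i\<in>UNIV. norm (X$i))"
    unfolding norm_vec_def by (rule L2_set_le_sum) auto
  also have "\<dots> \<le> (\<Sum>i\<in>UNIV. \<Sum>j\<in>UNIV. \<bar>X$i$j\<bar>)"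
    by (rule sum_mono) (simp add: norm_le_l1_cart)
  finally show ?thesis .
qed

lemma norm_matpow: "norm (matpow (M::real^'n^'n) k) \<le> real CARD('n) * real CARD('n) * onorm ((*v) M) ^ k"
proof -
  have "norm (matpow M k) \<le> (\<Sum>i\<in>(UNIV::'n set). \<Sum>j\<in>(UNIV::'n set). onorm ((*v) M) ^ k)"
    by (rule order_trans[OF norm_le_mx]) (intro sum_mono order_trans[OF matrix_component_le_onorm onorm_matpow])
  then show ?thesis by simp
qed

lemma mexp_bound_summable: "summable (\<lambda>k. real CARD('n) * real CARD('n) * ((R * onorm ((*v) (M::real^'n^'n))) ^ k / fact k))"
  using summable_exp_generic[of "R * onorm ((*v) M)"]
  by (intro summable_mult) (simp add: divide_inverse_commute)

lemma mexp_term_bound: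
  assumes "\<bar>t\<bar> \<le> R"
  shows "norm ((1 / fact k) *\<^sub>R matpow (t *\<^sub>R (M::real^'n^'n)) k) \<le>
     real CARD('n) * real CARD('n) * ((R * onorm ((*v) M)) ^ k / fact k)"
proof -
  have o: "0 \<le> onorm ((*v) M)" by (auto intro: onorm_pos_le)
  have "norm ((1 / fact k) *\<^sub>R matpow (t *\<^sub>R M) k) = \<bar>t\<bar>^k / fact k * norm (matpow M k)"
    by (simp add: matpow_scale power_abs)
  also have "\<dots> \<le> R^k / fact k * (real CARD('n) * real CARD('n) * onorm ((*v) M) ^ k)"
    using assms by (intro mult_mono divide_right_mono power_mono norm_matpow) (auto intro: o)
  finally show ?thesis by (simp add: power_mult_distrib field_simps)
qed

lemma mexp_summable: "summable (\<lambda>k. norm ((1 / fact k) *\<^sub>R matpow (t *\<^sub>R (M::real^'n^'n)) k))"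
  by (rule summable_comparison_test'[OF mexp_bound_summable[of "\<bar>t\<bar>" M]])
     (use mexp_term_bound[of t "\<bar>t\<bar>" _ M] in \<open>simp only: real_norm_def abs_norm_cancel\<close>)

lemma mexp_sums: "(\<lambda>k. (1 / fact k) *\<^sub>R matpow (t *\<^sub>R (M::real^'n^'n)) k) sums mexp (t *\<^sub>R M)"
  unfolding mexp_def by (rule summable_sums[OF summable_norm_cancel[OF mexp_summable]])

lemma mexp_entry: "mexp (t *\<^sub>R (M::real^'n^'n)) $ i $ j = (\<Sum>k. t^k / fact k * matpow M k $ i $ j)"
proof -
  have bl: "bounded_linear (\<lambda>X::real^'n^'n. X $ i $ j)"
    by (rule bounded_linear_compose[OF bounded_linear_vec_nth[of j] bounded_linear_vec_nth[of i]])
  have "(\<lambda>k. ((1 / fact k) *\<^sub>R matpow (t *\<^sub>R M) k) $ i $ j) sums (mexp (t *\<^sub>R M) $ i $ j)"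
    by (rule bounded_linear.sums[OF bl mexp_sums])
  then show ?thesis by (simp add: matpow_scale sums_iff)
qed

lemma mexp_entry_summable: "summable (\<lambda>k. norm (t^k / fact k * matpow (M::real^'n^'n) k $ i $ j))"
proof -
  have "norm (t^k / fact k * matpow M k $ i $ j) \<le> norm ((1 / fact k) *\<^sub>R matpow (t *\<^sub>R M) k)" for k
  proof -
    have "norm (t^k / fact k * matpow M k $ i $ j) = norm (((1 / fact k) *\<^sub>R matpow (t *\<^sub>R M) k) $ i $ j)"
      by (simp add: matpow_scale)
    also have "\<dots> \<le> norm ((1 / fact k) *\<^sub>R matpow (t *\<^sub>R M) k)"
      by (rule order_trans[OF Finite_Cartesian_Product.norm_nth_le[of "((1 / fact k) *\<^sub>R matpow (t *\<^sub>R M) k) $ i" j] Finite_Cartesian_Product.norm_nth_le])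
    finally show ?thesis .
  qed
  then show ?thesis by (intro summable_comparison_test'[OF mexp_summable[of t M]]) auto
qed

lemma binom_fact_sum: "(s+t)^k / fact k = (\<Sum>p\<le>k. s^p / fact p * (t^(k-p) / fact (k-p)) :: real)"
proof -
  have "(s+t)^k / fact k = (\<Sum>p\<le>k. of_nat (k choose p) * s^p * t^(k-p) / fact k)"
    by (simp add: binomial_ring sum_divide_distrib)
  also have "\<dots> = (\<Sum>p\<le>k. s^p / fact p * (t^(k-p) / fact (k-p)))"
    by (rule sum.cong) (auto simp: binomial_fact field_simps)
  finally show ?thesis .
qed

lemma mexp_add: "mexp ((s+t) *\<^sub>R (M::real^'n^'n)) = mexp (s *\<^sub>R M) ** mexp (t *\<^sub>R M)"
proof -
  let ?P = "matpow M"
  have "mexp ((s+t) *\<^sub>R M) $ i $ j = (mexp (s *\<^sub>R M) ** mexp (t *\<^sub>R M)) $ i $ j" for i j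
  proof -
    define c where "c l k = (\<Sum>p\<le>k. (s^p / fact p * ?P p $ i $ l) * (t^(k-p) / fact (k-p) * ?P (k-p) $ l $ j))" for l k
    have cp: "mexp (s *\<^sub>R M) $ i $ l * mexp (t *\<^sub>R M) $ l $ j = (\<Sum>k. c l k)" for l
      unfolding mexp_entry c_def by (rule Cauchy_product[OF mexp_entry_summable mexp_entry_summable])
    have cs: "summable (c l)" for l
      unfolding c_def by (rule summable_Cauchy_product[OF mexp_entry_summable mexp_entry_summable])
    have inner: "(\<Sum>l\<in>UNIV. c l k) = (s+t)^k / fact k * ?P k $ i $ j" for k
    proof -
      have "(\<Sum>l\<in>UNIV. c l k) = (\<Sum>p\<le>k. s^p / fact p * (t^(k-p) / fact (k-p)) * (\<Sum>l\<in>UNIV. ?P p $ i $ l * ?P (k-p) $ l $ j))"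
        unfolding c_def by (subst sum.swap) (simp add: sum_distrib_left mult_ac)
      also have "\<dots> = (\<Sum>p\<le>k. s^p / fact p * (t^(k-p) / fact (k-p)) * ?P k $ i $ j)"
      proof (rule sum.cong[OF refl])
        fix p assume "p \<in> {..k}"
        then have "(?P p ** ?P (k-p)) $ i $ j = ?P k $ i $ j" by (simp add: matpow_add)
        then show "s^p / fact p * (t^(k-p) / fact (k-p)) * (\<Sum>l\<in>UNIV. ?P p $ i $ l * ?P (k-p) $ l $ j) =
          s^p / fact p * (t^(k-p) / fact (k-p)) * ?P k $ i $ j"
          by (simp add: matrix_matrix_mult_def)
      qed
      also have "\<dots> = (s+t)^k / fact k * ?P k $ i $ j"
        by (simp add: binom_fact_sum sum_distrib_right)
      finally show ?thesis .
    qed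
    have "(mexp (s *\<^sub>R M) ** mexp (t *\<^sub>R M)) $ i $ j = (\<Sum>l\<in>UNIV. \<Sum>k. c l k)"
      by (simp add: matrix_matrix_mult_def cp)
    also have "\<dots> = (\<Sum>k. \<Sum>l\<in>UNIV. c l k)"
      by (rule suminf_sum[symmetric]) (rule cs)
    also have "\<dots> = mexp ((s+t) *\<^sub>R M) $ i $ j"
      by (simp add: inner mexp_entry)
    finally show ?thesis by simp
  qed
  then show ?thesis by (simp add: vec_eq_iff)
qed

lemma mexp_cont: "continuous_on UNIV (\<lambda>t. mexp (t *\<^sub>R (M::real^'n^'n)))"
proof -
  have c: "continuous_on {-R..R} (\<lambda>t. mexp (t *\<^sub>R M))" for R
  proof (rule uniform_limit_theorem)
    show "uniform_limit {-R..R} (\<lambda>n t. \<Sum>k<n. (1 / fact k) *\<^sub>R matpow (t *\<^sub>R M) k) (\<lambda>t. mexp (t *\<^sub>R M)) sequentially"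
      unfolding mexp_def
      by (rule Weierstrass_m_test[OF mexp_term_bound[where R=R] mexp_bound_summable]) auto
    show "\<forall>\<^sub>F n in sequentially. continuous_on {-R..R} (\<lambda>t. \<Sum>k<n. (1 / fact k) *\<^sub>R matpow (t *\<^sub>R M) k)"
      by (simp add: matpow_scale continuous_intros)
  qed simp
  show ?thesis unfolding continuous_on_eq_continuous_at[OF open_UNIV]
  proof
    fix x :: real
    have "x \<in> interior {-(\<bar>x\<bar>+1)..\<bar>x\<bar>+1}" by auto
    then show "isCont (\<lambda>t. mexp (t *\<^sub>R M)) x" using continuous_on_interior[OF c] by blast
  qed
qed

lemma mexp_semigroup: "mexp ((t - s) *\<^sub>R M) *v y = mexp (t *\<^sub>R M) *v (mexp ((-s) *\<^sub>R (M::real^'n^'n)) *v y)"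
  using mexp_add[of t "-s" M] by (simp add: matrix_vector_mul_assoc)


(* ---- Cad ---- *)


lemma borel_to_leb_on: "f \<in> borel_measurable borel \<Longrightarrow> (f::'a::euclidean_space \<Rightarrow> 'b::euclidean_space) \<in> borel_measurable (lebesgue_on S)"
  by (intro measurable_restrict_space1 measurable_completion) simp

lemma cadlag_local_bound:
  assumes "cadlag g"
  shows "\<exists>d>0. \<exists>B. \<forall>y. dist y x < d \<longrightarrow> \<bar>g y\<bar> \<le> B"
proof -
  from assms have r: "(g \<longlongrightarrow> g x) (at_right x)" and "\<exists>l. (g \<longlongrightarrow> l) (at_left x)"
    unfolding cadlag_def continuous_within by auto
  then obtain l where l: "(g \<longlongrightarrow> l) (at_left x)" by blast
  have "\<forall>\<^sub>F y in at_right x. dist (g y) (g x) < 1" using r by (rule tendstoD) simp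
  then obtain d1 where d1: "d1 > x" "\<And>y. y > x \<Longrightarrow> y < d1 \<Longrightarrow> dist (g y) (g x) < 1"
    unfolding eventually_at_right_field by blast
  have "\<forall>\<^sub>F y in at_left x. dist (g y) l < 1" using l by (rule tendstoD) simp
  then obtain d2 where d2: "d2 < x" "\<And>y. y > d2 \<Longrightarrow> y < x \<Longrightarrow> dist (g y) l < 1"
    unfolding eventually_at_left_field by blast
  define d where "d = min (d1 - x) (x - d2)"
  have "\<bar>g y\<bar> \<le> \<bar>g x\<bar> + \<bar>l\<bar> + 1" if "dist y x < d" for y
  proof (cases "y = x")
    case False
    show ?thesis
    proof (cases "y > x")
      case True
      then have "dist (g y) (g x) < 1" using d1 that by (auto simp: d_def dist_real_def)
      then show ?thesis by (auto simp: dist_real_def)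
    next
      case False
      then have "y < x" using \<open>y \<noteq> x\<close> by auto
      then have "dist (g y) l < 1" using d2 that by (auto simp: d_def dist_real_def)
      then show ?thesis by (auto simp: dist_real_def)
    qed
  qed auto
  moreover have "d > 0" using d1 d2 by (auto simp: d_def)
  ultimately show ?thesis by blast
qed

lemma cadlag_bounded:
  assumes "cadlag g"
  shows "\<exists>B. \<forall>x\<in>{c..d}. \<bar>g x\<bar> \<le> B"
proof -
  have "\<forall>x. \<exists>e. e > 0 \<and> (\<exists>B. \<forall>y. dist y x < e \<longrightarrow> \<bar>g y\<bar> \<le> B)"
    using cadlag_local_bound[OF assms] by blast
  then obtain e Bf where e: "\<And>x. e x > 0" and Bf: "\<And>x y. dist y x < e x \<Longrightarrow> \<bar>g y\<bar> \<le> Bf x"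
    by metis
  have cpt: "compact {c..d}" by simp
  have cover: "{c..d} \<subseteq> \<Union> ((\<lambda>x. ball x (e x)) ` {c..d})"
    using e by (auto simp: dist_commute)
  obtain C where C: "C \<subseteq> {c..d}" "finite C" "{c..d} \<subseteq> \<Union> ((\<lambda>x. ball x (e x)) ` C)"
    by (rule compactE_image[of "{c..d}" "{c..d}" "\<lambda>x. ball x (e x)", OF cpt _ cover]) auto
  have "\<bar>g y\<bar> \<le> (\<Sum>x\<in>C. \<bar>Bf x\<bar>)" if yin: "y \<in> {c..d}" for y
  proof -
    obtain x where x: "x \<in> C" "dist y x < e x" using C(3) yin by (force simp: dist_commute)
    then have "\<bar>g y\<bar> \<le> \<bar>Bf x\<bar>" using Bf by force
    also have "\<dots> \<le> (\<Sum>x\<in>C. \<bar>Bf x\<bar>)"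
      by (rule member_le_sum) (use x C in auto)
    finally show ?thesis .
  qed
  then show ?thesis by blast
qed

lemma cadlag_measurable:
  assumes "cadlag g"
  shows "g \<in> borel_measurable borel"
proof (rule borel_measurable_LIMSEQ_real)
  define s where "s n t = real_of_int (\<lfloor>real (Suc n) * t\<rfloor> + 1) / real (Suc n)" for n t
  show "(\<lambda>t. g (s n t)) \<in> borel_measurable borel" for n
  proof -
    have m: "(\<lambda>t. \<lfloor>real (Suc n) * t\<rfloor>) \<in> measurable borel (count_space UNIV)"
      by (rule measurable_compose[OF _ measurable_real_floor]) simp
    show ?thesis unfolding s_def
      by (rule measurable_compose_countable'[where f="\<lambda>i t. g (real_of_int (i + 1) / real (Suc n))", OF _ m]) auto
  qed
  fix t :: real
  have lo: "t < s n t" and hi: "s n t \<le> t + inverse (real (Suc n))" for n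
  proof -
    have "real (Suc n) * t < real_of_int (\<lfloor>real (Suc n) * t\<rfloor> + 1)" by linarith
    then show "t < s n t" unfolding s_def by (simp add: field_simps)
    have "real_of_int (\<lfloor>real (Suc n) * t\<rfloor> + 1) \<le> real (Suc n) * t + 1" by linarith
    then have "s n t \<le> (real (Suc n) * t + 1) / real (Suc n)"
      unfolding s_def by (rule divide_right_mono) simp
    also have "\<dots> = t + inverse (real (Suc n))" by (simp add: field_simps)
    finally show "s n t \<le> t + inverse (real (Suc n))" .
  qed
  have "(\<lambda>n. s n t) \<longlonglongrightarrow> t"
    apply (rule tendsto_sandwich[OF _ _ tendsto_const LIMSEQ_inverse_real_of_nat_add])
     apply (rule always_eventually, use lo in \<open>auto intro: less_imp_le\<close>)
    apply (rule always_eventually, use hi in auto)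
    done
  then have "filterlim (\<lambda>n. s n t) (at_right t) sequentially"
    by (rule tendsto_imp_filterlim_at_right) (use lo in \<open>auto intro: always_eventually\<close>)
  moreover have "(g \<longlongrightarrow> g t) (at_right t)"
    using assms unfolding cadlag_def continuous_within by auto
  ultimately show "(\<lambda>n. g (s n t)) \<longlonglongrightarrow> g t"
    by (rule filterlim_compose[rotated])
qed

lemma cadlag_integrable:
  assumes "cadlag g"
  shows "g integrable_on {c..d}"
proof -
  obtain B where B: "\<And>x. x \<in> {c..d} \<Longrightarrow> \<bar>g x\<bar> \<le> B" using cadlag_bounded[OF assms] by blast
  show ?thesis
    by (rule measurable_bounded_by_integrable_imp_integrable[where g="\<lambda>_. B"])
       (auto intro: borel_to_leb_on cadlag_measurable[OF assms] B)
qed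

lemma cont_glue:
  assumes "\<And>c. continuous_on {c..0::real} F"
  shows "continuous_on {..0} F"
  unfolding continuous_on_eq_continuous_within
proof
  fix x :: real assume x: "x \<in> {..0}"
  have "at x within {..0} = at x within {x-1..0}"
    by (rule at_within_nhd[where S="{x-1<..}"]) auto
  moreover have "continuous (at x within {x-1..0}) F"
    using assms[of "x-1"] x by (simp add: continuous_on_eq_continuous_within)
  ultimately show "continuous (at x within {..0}) F" by simp
qed


(* ---- Helpers ---- *)


lemma mv_cont[continuous_intros]:
  fixes M :: "'a::topological_space \<Rightarrow> real^'n^'m"
  assumes "continuous_on S M" "continuous_on S x"
  shows "continuous_on S (\<lambda>t. M t *v x t)"
  unfolding matrix_vector_mult_def
  by (intro continuous_on_vec_lambda continuous_intros continuous_on_component assms)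

lemma norm_mv_le: "norm ((M::real^'n^'m) *v x) \<le> (\<Sum>i\<in>UNIV. \<Sum>j\<in>UNIV. \<bar>M$i$j\<bar>) * norm x"
  by (rule order_trans[OF onorm[OF matrix_vector_mul_bounded_linear]])
     (intro mult_right_mono onorm_le_matrix_component_sum norm_ge_zero)

lemma exp_int_left:
  fixes c t :: real assumes "c > 0"
  shows "((\<lambda>s. exp (c * s)) has_integral exp (c * t) / c) {..t}"
proof -
  have h: "((\<lambda>x. exp (-c*x)) has_integral exp (-c*(-t))/c) {-t..}"
    by (rule has_integral_exp_minus_to_infinity[OF assms])
  have ai: "(\<lambda>x. exp (-c*x)) absolutely_integrable_on {-t..}"
    using h by (intro nonnegative_absolutely_integrable_1) (auto simp: has_integral_integrable)
  have eq: "(\<lambda>x. exp (-c*(-x))) absolutely_integrable_on {..t} \<and> integral {..t} (\<lambda>x. exp (-c*(-x))) = exp (-c*(-t))/c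
    \<longleftrightarrow> (\<lambda>x. exp (-c*x)) absolutely_integrable_on {-t..} \<and> integral {-t..} (\<lambda>x. exp (-c*x)) = exp (-c*(-t))/c"
    by (rule has_absolute_integral_reflect_real) (auto simp: image_subset_iff)
  have "(\<lambda>x. exp (-c*(-x))) absolutely_integrable_on {..t} \<and> integral {..t} (\<lambda>x. exp (-c*(-x))) = exp (-c*(-t))/c"
    unfolding eq using ai integral_unique[OF h] by blast
  then have I1: "(\<lambda>x. exp (-c*(-x))) integrable_on {..t}" and I2: "integral {..t} (\<lambda>x. exp (-c*(-x))) = exp (-c*(-t))/c"
    using set_lebesgue_integral_eq_integral(1) by auto
  have "((\<lambda>x. exp (-c*(-x))) has_integral integral {..t} (\<lambda>x. exp (-c*(-x)))) {..t}"
    by (rule integrable_integral[OF I1])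
  then show ?thesis unfolding I2 by simp
qed

lemma exp_int_seg:
  fixes c t :: real assumes "c \<noteq> 0" "t \<le> 0"
  shows "((\<lambda>s. exp (c * s)) has_integral (1 - exp (c * t)) / c) {t..0}"
proof -
  have "((\<lambda>s. exp (c * s)) has_integral (exp (c*0)/c - exp (c*t)/c)) {t..0}"
    by (rule fundamental_theorem_of_calculus[OF assms(2)])
       (use assms in \<open>auto intro!: derivative_eq_intros simp: has_real_derivative_iff_has_vector_derivative[symmetric]\<close>)
  then show ?thesis by (simp add: diff_divide_distrib)
qed

lemma Ftr_lip:
  fixes f :: "'x::real_normed_vector \<Rightarrow> 'y::real_normed_vector \<Rightarrow> 'r::real_normed_vector"
  assumes lip: "\<And>x1 y1 x2 y2. norm (f x1 y1 - f x2 y2) \<le> K * (norm (x1 - x2) + norm (y1 - y2))"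
  shows "norm (Ftr f x1 y1 w - Ftr f x2 y2 w) \<le> K * (norm (x1 - x2) + norm (y1 - y2))"
proof -
  let ?e = "exp (zv w)"
  have "Ftr f x1 y1 w - Ftr f x2 y2 w = exp (- zv w) *\<^sub>R (f (?e *\<^sub>R x1) (?e *\<^sub>R y1) - f (?e *\<^sub>R x2) (?e *\<^sub>R y2))"
    by (simp add: Ftr_def scaleR_diff_right)
  then have "norm (Ftr f x1 y1 w - Ftr f x2 y2 w) = exp (- zv w) * norm (f (?e *\<^sub>R x1) (?e *\<^sub>R y1) - f (?e *\<^sub>R x2) (?e *\<^sub>R y2))"
    by simp
  also have "\<dots> \<le> exp (- zv w) * (K * (norm (?e *\<^sub>R x1 - ?e *\<^sub>R x2) + norm (?e *\<^sub>R y1 - ?e *\<^sub>R y2)))"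
    by (rule mult_left_mono[OF lip]) simp
  also have "\<dots> = K * (norm (x1 - x2) + norm (y1 - y2)) * (exp (- zv w) * ?e)"
    by (simp only: scaleR_diff_right[symmetric] norm_scaleR abs_exp_cancel) (simp only: algebra_simps)
  also have "exp (- zv w) * ?e = 1" by (simp add: exp_minus_inverse mult.commute)
  finally show ?thesis by simp
qed

lemma lip_cont:
  fixes f :: "'x::real_normed_vector \<Rightarrow> 'y::real_normed_vector \<Rightarrow> 'r::real_normed_vector"
  assumes lip: "\<And>x1 y1 x2 y2. norm (f x1 y1 - f x2 y2) \<le> K * (norm (x1 - x2) + norm (y1 - y2))"
  shows "continuous_on UNIV (\<lambda>p. f (fst p) (snd p))"
  unfolding continuous_on_iff
proof (intro ballI allI impI)
  fix p :: "'x \<times> 'y" and e :: real assume e: "e > 0"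
  define d where "d = e / (2 * \<bar>K\<bar> + 1)"
  have d: "d > 0" using e by (simp add: d_def add_nonneg_pos)
  have H: "dist (f (fst q) (snd q)) (f (fst p) (snd p)) < e" if "dist q p < d" for q
  proof -
    have "dist (fst q) (fst p) < d" "dist (snd q) (snd p) < d"
      using that dist_fst_le[of q p] dist_snd_le[of q p] by linarith+
    then have X: "norm (fst q - fst p) + norm (snd q - snd p) \<le> 2 * d" by (simp add: dist_norm)
    have "dist (f (fst q) (snd q)) (f (fst p) (snd p)) \<le> K * (norm (fst q - fst p) + norm (snd q - snd p))"
      using lip by (simp add: dist_norm)
    also have "\<dots> \<le> \<bar>K\<bar> * (norm (fst q - fst p) + norm (snd q - snd p))"
      by (rule mult_right_mono) auto
    also have "\<dots> \<le> \<bar>K\<bar> * (2 * d)"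
      by (rule mult_left_mono[OF X]) auto
    also have "\<bar>K\<bar> * (2 * d) = e * (2 * \<bar>K\<bar> / (2 * \<bar>K\<bar> + 1))"
      by (simp add: d_def)
    also have "\<dots> < e * 1"
      by (intro mult_strict_left_mono) (auto simp: divide_less_eq e)
    also have "e * 1 = e" by simp
    finally show ?thesis .
  qed
  then show "\<exists>d>0. \<forall>q\<in>UNIV. dist q p < d \<longrightarrow> dist (f (fst q) (snd q)) (f (fst p) (snd p)) < e"
    by (intro exI[of _ d] conjI ballI impI d H)
qed

lemma lip_cont_comp:
  fixes f :: "'x::real_normed_vector \<Rightarrow> 'y::real_normed_vector \<Rightarrow> 'r::real_normed_vector"
  assumes lip: "\<And>x1 y1 x2 y2. norm (f x1 y1 - f x2 y2) \<le> K * (norm (x1 - x2) + norm (y1 - y2))"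
    and "continuous_on S p" "continuous_on S q"
  shows "continuous_on S (\<lambda>t. f (p t) (q t))"
  using continuous_on_compose2[OF lip_cont[OF lip] continuous_on_Pair[OF assms(2,3)]] by simp


(* ---- Loc ---- *)


lemma exp3: "exp x * exp y * exp z = exp (x + y + z :: real)" by (simp add: exp_add)

locale L42 =
  fixes A :: "real^'n^'n" and B :: "real^'m^'m"
    and f :: "real^'n \<Rightarrow> real^'m \<Rightarrow> real^'n" and g :: "real^'n \<Rightarrow> real^'m \<Rightarrow> real^'m"
    and a b K \<eta> :: real and w :: "real \<Rightarrow> real"
    and xh :: "real \<Rightarrow> real^'n" and yh :: "real \<Rightarrow> real^'m"
  assumes ba: "b < 0" "0 < a"
    and A_dich: "\<And>t x. t \<le> 0 \<Longrightarrow> norm (mexp (t *\<^sub>R A) *v x) \<le> exp (a * t) * norm x"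
    and B_dich: "\<And>t y. t \<ge> 0 \<Longrightarrow> norm (mexp (t *\<^sub>R B) *v y) \<le> exp (b * t) * norm y"
    and f_lip: "\<And>x1 y1 x2 y2. norm (f x1 y1 - f x2 y2) \<le> K * (norm (x1 - x2) + norm (y1 - y2))"
    and g_lip: "\<And>x1 y1 x2 y2. norm (g x1 y1 - g x2 y2) \<le> K * (norm (x1 - x2) + norm (y1 - y2))"
    and cad: "cadlag (\<lambda>t. zv (theta t w))"
    and xh_c: "continuous_on UNIV xh" and yh_c: "continuous_on UNIV yh"
    and eta: "b < \<eta>" "\<eta> < a"
    and rho: "K / (a - \<eta>) + K / (\<eta> - b) < 1"
    and K0: "0 \<le> K"
begin

definition "hh t = zv (theta t w)"
definition "W t = exp (- \<eta> * t - Zint w t)"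
definition "dF u v s = Ftr f (u s + xh s) (v s + yh s) (theta s w) - Ftr f (xh s) (yh s) (theta s w)"
definition "dG u v s = Ftr g (u s + xh s) (v s + yh s) (theta s w) - Ftr g (xh s) (yh s) (theta s w)"
definition "gA u v s = exp (- Zint w s) *\<^sub>R (mexp ((-s) *\<^sub>R A) *v dF u v s)"
definition "gB u v s = exp (- Zint w s) *\<^sub>R (mexp ((-s) *\<^sub>R B) *v dG u v s)"
definition "TU u0 u v t = exp (Zint w t) *\<^sub>R (mexp (t *\<^sub>R A) *v u0) - exp (Zint w t) *\<^sub>R (mexp (t *\<^sub>R A) *v integral {t..0} (gA u v))"
definition "TV u v t = exp (Zint w t) *\<^sub>R (mexp (t *\<^sub>R B) *v integral {..t} (gB u v))"

lemma Z_eq: "t \<le> 0 \<Longrightarrow> Zint w t = - integral {t..0} hh"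
  unfolding Zint_def oint_def hh_def by (cases "t = 0") auto

lemma hh_int: "hh integrable_on {c..d}"
  unfolding hh_def by (rule cadlag_integrable[OF cad])

lemma hh_meas: "hh \<in> borel_measurable borel"
  unfolding hh_def by (rule cadlag_measurable[OF cad])

lemma Z_cont: "continuous_on {..0} (Zint w)"
proof (rule cont_glue)
  fix c :: real
  show "continuous_on {c..0} (Zint w)"
  proof (cases "c \<le> 0")
    case True
    have "continuous_on {c..0} (\<lambda>t. - integral {t..0} hh)"
      by (intro continuous_on_minus indefinite_integral_continuous_1' hh_int)
    then show ?thesis by (rule continuous_on_eq) (auto simp: Z_eq)
  qed simp
qed

lemma W_cont: "continuous_on {..0} W"
  unfolding W_def by (intro continuous_intros Z_cont)

lemma W_pos: "W t > 0" unfolding W_def by simp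

lemma dF_lip: "norm (dF u v s - dF u' v' s) \<le> K * (norm (u s - u' s) + norm (v s - v' s))"
  using Ftr_lip[OF f_lip, of "u s + xh s" "v s + yh s" "theta s w" "u' s + xh s" "v' s + yh s"]
  by (simp add: dF_def)

lemma dG_lip: "norm (dG u v s - dG u' v' s) \<le> K * (norm (u s - u' s) + norm (v s - v' s))"
  using Ftr_lip[OF g_lip, of "u s + xh s" "v s + yh s" "theta s w" "u' s + xh s" "v' s + yh s"]
  by (simp add: dG_def)

lemma dF_bound: "norm (dF u v s) \<le> K * (norm (u s) + norm (v s))"
  using Ftr_lip[OF f_lip, of "u s + xh s" "v s + yh s" "theta s w" "xh s" "yh s"]
  by (simp add: dF_def)

lemma dG_bound: "norm (dG u v s) \<le> K * (norm (u s) + norm (v s))"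
  using Ftr_lip[OF g_lip, of "u s + xh s" "v s + yh s" "theta s w" "xh s" "yh s"]
  by (simp add: dG_def)

lemma cfst: "continuous_on UNIV (P::real \<Rightarrow> 'c::topological_space) \<Longrightarrow> continuous_on UNIV (\<lambda>p::real\<times>real. P (fst p))"
  by (rule continuous_on_compose2[of UNIV P UNIV fst]) (auto intro: continuous_on_fst continuous_on_id)

lemma cmin: "continuous_on {..0} (P::real \<Rightarrow> 'c::topological_space) \<Longrightarrow> continuous_on UNIV (\<lambda>s. P (min s 0))"
  by (rule continuous_on_compose2[of "{..0}" P UNIV "\<lambda>s. min s 0"]) (auto intro: continuous_intros)

lemma gA_meas:
  assumes u: "continuous_on {..0} u" and v: "continuous_on {..0} v" and S: "S \<subseteq> {..0}"
  shows "gA u v \<in> borel_measurable (lebesgue_on S)"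
proof -
  define Psi where "Psi p = exp (- Zint w (min (fst p) 0)) *\<^sub>R (mexp ((- fst p) *\<^sub>R A) *v
     (exp (- snd p) *\<^sub>R (f (exp (snd p) *\<^sub>R (u (min (fst p) 0) + xh (fst p))) (exp (snd p) *\<^sub>R (v (min (fst p) 0) + yh (fst p)))
        - f (exp (snd p) *\<^sub>R xh (fst p)) (exp (snd p) *\<^sub>R yh (fst p)))))" for p :: "real \<times> real"
  have cu: "continuous_on UNIV (\<lambda>p::real\<times>real. u (min (fst p) 0))" by (rule cfst[OF cmin[OF u]])
  have cv: "continuous_on UNIV (\<lambda>p::real\<times>real. v (min (fst p) 0))" by (rule cfst[OF cmin[OF v]])
  have cz: "continuous_on UNIV (\<lambda>p::real\<times>real. Zint w (min (fst p) 0))" by (rule cfst[OF cmin[OF Z_cont]])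
  have cx: "continuous_on UNIV (\<lambda>p::real\<times>real. xh (fst p))" by (rule cfst[OF xh_c])
  have cy: "continuous_on UNIV (\<lambda>p::real\<times>real. yh (fst p))" by (rule cfst[OF yh_c])
  have cm: "continuous_on UNIV (\<lambda>p::real\<times>real. mexp ((- fst p) *\<^sub>R A))"
    by (rule cfst[OF continuous_on_compose2[OF mexp_cont, of UNIV uminus]]) (auto intro: continuous_intros)
  have cs: "continuous_on UNIV (\<lambda>p::real\<times>real. snd p)" by (rule continuous_on_snd[OF continuous_on_id])
  have cf1: "continuous_on UNIV (\<lambda>p::real\<times>real. f (exp (snd p) *\<^sub>R (u (min (fst p) 0) + xh (fst p))) (exp (snd p) *\<^sub>R (v (min (fst p) 0) + yh (fst p))))"
    by (rule lip_cont_comp[OF f_lip]) (intro continuous_intros cu cv cx cy cs)+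
  have cf2: "continuous_on UNIV (\<lambda>p::real\<times>real. f (exp (snd p) *\<^sub>R xh (fst p)) (exp (snd p) *\<^sub>R yh (fst p)))"
    by (rule lip_cont_comp[OF f_lip]) (intro continuous_intros cx cy cs)+
  have cP: "continuous_on UNIV Psi"
    unfolding Psi_def by (intro continuous_intros mv_cont cz cm cf1 cf2 cs)
  have m1: "(\<lambda>s. (s, hh s)) \<in> borel_measurable borel"
    by (rule borel_measurable_Pair[OF _ hh_meas]) simp
  have m2: "(\<lambda>s. Psi (s, hh s)) \<in> borel_measurable (lebesgue_on S)"
    by (rule borel_to_leb_on[OF borel_measurable_continuous_on[OF cP m1]])
  have eq: "Psi (s, hh s) = gA u v s" if "s \<in> S" for s
  proof -
    have s0: "min s 0 = s" using that S by auto
    show ?thesis unfolding Psi_def gA_def dF_def Ftr_def hh_def using s0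
      by (simp add: scaleR_diff_right)
  qed
  show ?thesis
    using m2 by (rule measurable_cong[THEN iffD1, rotated]) (simp add: eq)
qed

lemma gB_meas:
  assumes u: "continuous_on {..0} u" and v: "continuous_on {..0} v" and S: "S \<subseteq> {..0}"
  shows "gB u v \<in> borel_measurable (lebesgue_on S)"
proof -
  define Psi where "Psi p = exp (- Zint w (min (fst p) 0)) *\<^sub>R (mexp ((- fst p) *\<^sub>R B) *v
     (exp (- snd p) *\<^sub>R (g (exp (snd p) *\<^sub>R (u (min (fst p) 0) + xh (fst p))) (exp (snd p) *\<^sub>R (v (min (fst p) 0) + yh (fst p)))
        - g (exp (snd p) *\<^sub>R xh (fst p)) (exp (snd p) *\<^sub>R yh (fst p)))))" for p :: "real \<times> real"
  have cu: "continuous_on UNIV (\<lambda>p::real\<times>real. u (min (fst p) 0))" by (rule cfst[OF cmin[OF u]])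
  have cv: "continuous_on UNIV (\<lambda>p::real\<times>real. v (min (fst p) 0))" by (rule cfst[OF cmin[OF v]])
  have cz: "continuous_on UNIV (\<lambda>p::real\<times>real. Zint w (min (fst p) 0))" by (rule cfst[OF cmin[OF Z_cont]])
  have cx: "continuous_on UNIV (\<lambda>p::real\<times>real. xh (fst p))" by (rule cfst[OF xh_c])
  have cy: "continuous_on UNIV (\<lambda>p::real\<times>real. yh (fst p))" by (rule cfst[OF yh_c])
  have cm: "continuous_on UNIV (\<lambda>p::real\<times>real. mexp ((- fst p) *\<^sub>R B))"
    by (rule cfst[OF continuous_on_compose2[OF mexp_cont, of UNIV uminus]]) (auto intro: continuous_intros)
  have cs: "continuous_on UNIV (\<lambda>p::real\<times>real. snd p)" by (rule continuous_on_snd[OF continuous_on_id])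
  have cf1: "continuous_on UNIV (\<lambda>p::real\<times>real. g (exp (snd p) *\<^sub>R (u (min (fst p) 0) + xh (fst p))) (exp (snd p) *\<^sub>R (v (min (fst p) 0) + yh (fst p))))"
    by (rule lip_cont_comp[OF g_lip]) (intro continuous_intros cu cv cx cy cs)+
  have cf2: "continuous_on UNIV (\<lambda>p::real\<times>real. g (exp (snd p) *\<^sub>R xh (fst p)) (exp (snd p) *\<^sub>R yh (fst p)))"
    by (rule lip_cont_comp[OF g_lip]) (intro continuous_intros cx cy cs)+
  have cP: "continuous_on UNIV Psi"
    unfolding Psi_def by (intro continuous_intros mv_cont cz cm cf1 cf2 cs)
  have m1: "(\<lambda>s. (s, hh s)) \<in> borel_measurable borel"
    by (rule borel_measurable_Pair[OF _ hh_meas]) simp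
  have m2: "(\<lambda>s. Psi (s, hh s)) \<in> borel_measurable (lebesgue_on S)"
    by (rule borel_to_leb_on[OF borel_measurable_continuous_on[OF cP m1]])
  have eq: "Psi (s, hh s) = gB u v s" if "s \<in> S" for s
  proof -
    have s0: "min s 0 = s" using that S by auto
    show ?thesis unfolding Psi_def gB_def dG_def Ftr_def hh_def using s0
      by (simp add: scaleR_diff_right)
  qed
  show ?thesis
    using m2 by (rule measurable_cong[THEN iffD1, rotated]) (simp add: eq)
qed

lemma mexp_c: "continuous_on S (\<lambda>t. mexp (t *\<^sub>R M))"
  using continuous_on_subset[OF mexp_cont] by blast

lemma mexp_cm: "continuous_on S (\<lambda>t. mexp ((- t) *\<^sub>R M))"
  by (rule continuous_on_compose2[OF mexp_cont continuous_on_minus[OF continuous_on_id]]) auto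

lemma gA_int:
  assumes u: "continuous_on {..0} u" and v: "continuous_on {..0} v" and t: "t \<le> 0"
  shows "gA u v integrable_on {t..0}"
proof -
  define mx where "mx M = (\<Sum>i\<in>UNIV. \<Sum>j\<in>UNIV. \<bar>M$i$j\<bar>)" for M :: "real^'n^'n"
  define G where "G s = exp (- Zint w s) * (mx (mexp ((-s) *\<^sub>R A)) * (K * (norm (u s) + norm (v s))))" for s
  have sub: "{t..0} \<subseteq> {..0}" by auto
  have cG: "continuous_on {t..0} G"
    unfolding G_def mx_def
    by (intro continuous_intros continuous_on_component mexp_cm continuous_on_subset[OF Z_cont sub]
          continuous_on_subset[OF u sub] continuous_on_subset[OF v sub])
  have b: "norm (gA u v s) \<le> G s" for s
  proof -
    have "norm (gA u v s) = exp (- Zint w s) * norm (mexp ((-s) *\<^sub>R A) *v dF u v s)"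
      by (simp add: gA_def)
    also have "\<dots> \<le> exp (- Zint w s) * (mx (mexp ((-s) *\<^sub>R A)) * norm (dF u v s))"
      unfolding mx_def by (intro mult_left_mono norm_mv_le) auto
    also have "\<dots> \<le> G s"
      unfolding G_def mx_def by (intro mult_left_mono dF_bound) (auto intro!: sum_nonneg)
    finally show ?thesis .
  qed
  show ?thesis
    by (rule measurable_bounded_by_integrable_imp_integrable[OF gA_meas[OF u v sub] integrable_continuous_interval[OF cG] b]) simp
qed

lemma Cm_bound:
  assumes "\<And>s. s \<le> 0 \<Longrightarrow> W s * norm (u s) \<le> M" "s \<le> 0"
  shows "norm (u s) \<le> M * exp (\<eta> * s + Zint w s)"
proof -
  have e: "W s * exp (\<eta> * s + Zint w s) = 1" unfolding W_def by (simp add: exp_add[symmetric])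
  have "norm (u s) = W s * norm (u s) * exp (\<eta> * s + Zint w s)" using e by (simp add: mult_ac)
  also have "\<dots> \<le> M * exp (\<eta> * s + Zint w s)" by (rule mult_right_mono[OF assms(1)[OF assms(2)]]) simp
  finally show ?thesis .
qed

lemma in_C_bounds:
  assumes "in_Cminus \<eta> w u v"
  obtains Mu Mv where "\<And>s. s \<le> 0 \<Longrightarrow> W s * norm (u s) \<le> Mu" "\<And>s. s \<le> 0 \<Longrightarrow> W s * norm (v s) \<le> Mv"
proof -
  from assms obtain Mu where "\<forall>x\<in>(\<lambda>t. exp (- \<eta> * t - Zint w t) * norm (u t)) ` {..0}. x \<le> Mu"
    unfolding in_Cminus_def bdd_above_def by blast
  moreover from assms obtain Mv where "\<forall>x\<in>(\<lambda>t. exp (- \<eta> * t - Zint w t) * norm (v t)) ` {..0}. x \<le> Mv"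
    unfolding in_Cminus_def bdd_above_def by blast
  ultimately have "\<And>s. s \<le> 0 \<Longrightarrow> W s * norm (u s) \<le> Mu" "\<And>s. s \<le> 0 \<Longrightarrow> W s * norm (v s) \<le> Mv"
    unfolding W_def by auto
  then show ?thesis by (rule that)
qed

lemma gB_int:
  assumes X: "in_Cminus \<eta> w u v" and S: "S \<subseteq> {..0}" "S \<in> sets lebesgue"
    and e: "(\<lambda>s. exp ((\<eta> - b) * s)) integrable_on S"
  shows "gB u v integrable_on S"
proof -
  obtain Mu Mv where Mu: "\<And>s. s \<le> 0 \<Longrightarrow> W s * norm (u s) \<le> Mu" and Mv: "\<And>s. s \<le> 0 \<Longrightarrow> W s * norm (v s) \<le> Mv"
    using in_C_bounds[OF X] by blast
  have u: "continuous_on {..0} u" and v: "continuous_on {..0} v" using X by (auto simp: in_Cminus_def)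
  define G where "G s = K * (Mu + Mv) * exp ((\<eta> - b) * s)" for s
  have Gi: "G integrable_on S" unfolding G_def using integrable_on_cmult_left[OF e] by simp
  have bnd: "norm (gB u v s) \<le> G s" if s: "s \<in> S" for s
  proof -
    have s0: "s \<le> 0" using S s by auto
    have "norm (gB u v s) = exp (- Zint w s) * norm (mexp ((-s) *\<^sub>R B) *v dG u v s)"
      by (simp add: gB_def)
    also have "\<dots> \<le> exp (- Zint w s) * (exp (b * (-s)) * norm (dG u v s))"
      by (intro mult_left_mono B_dich) (use s0 in auto)
    also have "\<dots> \<le> exp (- Zint w s) * (exp (b * (-s)) * (K * (Mu * exp (\<eta> * s + Zint w s) + Mv * exp (\<eta> * s + Zint w s))))"
      by (intro mult_left_mono order_trans[OF dG_bound] add_mono K0 Cm_bound[OF Mu s0] Cm_bound[OF Mv s0]) auto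
    also have "\<dots> = K * (Mu + Mv) * (exp (- Zint w s) * exp (b * (-s)) * exp (\<eta> * s + Zint w s))"
      by (simp add: algebra_simps)
    also have "\<dots> = G s" unfolding G_def exp3 by (simp add: algebra_simps)
    finally show ?thesis .
  qed
  show ?thesis
    by (rule measurable_bounded_by_integrable_imp_integrable[OF gB_meas[OF u v S(1)] Gi bnd S(2)])
qed

lemma gB_int_left: "in_Cminus \<eta> w u v \<Longrightarrow> t \<le> 0 \<Longrightarrow> gB u v integrable_on {..t}"
  by (rule gB_int) (use exp_int_left[of "\<eta> - b" t] eta in \<open>auto simp: has_integral_integrable\<close>)

lemma gB_int_seg: "in_Cminus \<eta> w u v \<Longrightarrow> gB u v integrable_on {t..0}"
  by (rule gB_int) (auto intro!: integrable_continuous_interval continuous_intros)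

lemma bl_L: "bounded_linear (\<lambda>y. c *\<^sub>R ((M::real^'k^'k) *v y))"
  by (rule bounded_linear_compose[OF bounded_linear_scaleR_right matrix_vector_mul_bounded_linear])

lemma TA:
  assumes u: "continuous_on {..0} u" and v: "continuous_on {..0} v" and t: "t \<le> 0"
  shows "((\<lambda>s. exp (Zint w t - Zint w s) *\<^sub>R (mexp ((t - s) *\<^sub>R A) *v dF u v s))
      has_integral (exp (Zint w t) *\<^sub>R (mexp (t *\<^sub>R A) *v u0) - TU u0 u v t)) {t..0}"
proof -
  let ?L = "\<lambda>y. exp (Zint w t) *\<^sub>R (mexp (t *\<^sub>R A) *v y)"
  have "(?L \<circ> gA u v has_integral ?L (integral {t..0} (gA u v))) {t..0}"
    by (rule has_integral_linear[OF integrable_integral[OF gA_int[OF u v t]] bl_L])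
  moreover have "?L \<circ> gA u v = (\<lambda>s. exp (Zint w t - Zint w s) *\<^sub>R (mexp ((t - s) *\<^sub>R A) *v dF u v s))"
    by (rule ext) (simp add: gA_def matrix_vector_mult_scaleR mexp_semigroup exp_diff divide_inverse exp_minus)
  ultimately show ?thesis by (simp add: TU_def)
qed

lemma TB:
  assumes X: "in_Cminus \<eta> w u v" and t: "t \<le> 0"
  shows "((\<lambda>s. exp (Zint w t - Zint w s) *\<^sub>R (mexp ((t - s) *\<^sub>R B) *v dG u v s))
      has_integral TV u v t) {..t}"
proof -
  let ?L = "\<lambda>y. exp (Zint w t) *\<^sub>R (mexp (t *\<^sub>R B) *v y)"
  have "(?L \<circ> gB u v has_integral ?L (integral {..t} (gB u v))) {..t}"
    by (rule has_integral_linear[OF integrable_integral[OF gB_int_left[OF X t]] bl_L])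
  moreover have "?L \<circ> gB u v = (\<lambda>s. exp (Zint w t - Zint w s) *\<^sub>R (mexp ((t - s) *\<^sub>R B) *v dG u v s))"
    by (rule ext) (simp add: gB_def matrix_vector_mult_scaleR mexp_semigroup exp_diff divide_inverse exp_minus)
  ultimately show ?thesis by (simp add: TV_def)
qed

lemma int_seg_cont:
  assumes "\<And>c. c \<le> 0 \<Longrightarrow> G integrable_on {c..0}"
  shows "continuous_on {..0} (\<lambda>t. integral {t..0} (G::real \<Rightarrow> 'c::banach))"
proof (rule cont_glue)
  fix c :: real
  show "continuous_on {c..0} (\<lambda>t. integral {t..0} G)"
    by (cases "c \<le> 0") (auto intro: indefinite_integral_continuous_1' assms)
qed

lemma TU_cont:
  assumes u: "continuous_on {..0} u" and v: "continuous_on {..0} v"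
  shows "continuous_on {..0} (TU u0 u v)"
  unfolding TU_def
  by (intro continuous_intros mv_cont mexp_c Z_cont int_seg_cont gA_int u v)

lemma TV_split:
  assumes X: "in_Cminus \<eta> w u v" and t: "t \<le> 0"
  shows "integral {..t} (gB u v) = integral {..0} (gB u v) - integral {t..0} (gB u v)"
proof -
  have "(gB u v has_integral (integral {..t} (gB u v) + integral {t..0} (gB u v))) ({..t} \<union> {t..0})"
    by (rule has_integral_Un[OF integrable_integral[OF gB_int_left[OF X t]] integrable_integral[OF gB_int_seg[OF X]]])
       (rule negligible_subset[OF negligible_sing[of t]], auto)
  moreover have "{..t} \<union> {t..0} = {..0::real}" using t by auto
  ultimately have "integral {..0} (gB u v) = integral {..t} (gB u v) + integral {t..0} (gB u v)"
    by (simp add: integral_unique)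
  then show ?thesis by simp
qed

lemma TV_cont:
  assumes X: "in_Cminus \<eta> w u v"
  shows "continuous_on {..0} (TV u v)"
proof -
  have "continuous_on {..0} (\<lambda>t. exp (Zint w t) *\<^sub>R (mexp (t *\<^sub>R B) *v (integral {..0} (gB u v) - integral {t..0} (gB u v))))"
  proof -
    have J: "continuous_on {..0} (\<lambda>t. integral {t..0} (gB u v))"
      by (rule int_seg_cont) (rule gB_int_seg[OF X])
    have c1: "continuous_on {..0} (\<lambda>t. integral {..0} (gB u v) - integral {t..0} (gB u v))"
      by (rule continuous_on_diff[OF continuous_on_const J])
    show ?thesis
      by (intro continuous_on_scaleR continuous_on_exp Z_cont mv_cont mexp_c c1)
  qed
  then show ?thesis
  proof (rule continuous_on_eq)
    fix t :: real assume "t \<in> {..0}"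
    then have "t \<le> 0" by simp
    then have "integral {..t} (gB u v) = integral {..0} (gB u v) - integral {t..0} (gB u v)"
      by (rule TV_split[OF X])
    then show "exp (Zint w t) *\<^sub>R (mexp (t *\<^sub>R B) *v (integral {..0} (gB u v) - integral {t..0} (gB u v))) = TV u v t"
      unfolding TV_def by simp
  qed
qed

end

(* ---- Est ---- *)


context L42 begin

lemma Wb: "W s * X \<le> D \<Longrightarrow> X \<le> D * exp (\<eta> * s + Zint w s)"
proof -
  assume h: "W s * X \<le> D"
  have e: "W s * exp (\<eta> * s + Zint w s) = 1" unfolding W_def by (simp add: exp_add[symmetric])
  have "X = W s * X * exp (\<eta> * s + Zint w s)" using e by (simp add: mult_ac)
  also have "\<dots> \<le> D * exp (\<eta> * s + Zint w s)" by (rule mult_right_mono[OF h]) simp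
  finally show ?thesis .
qed

lemma D_nonneg:
  assumes D: "\<And>s. s \<le> 0 \<Longrightarrow> W s * (norm (u s - u' s) + norm (v s - v' s)) \<le> D"
  shows "0 \<le> D"
proof -
  have "0 \<le> W 0 * (norm (u 0 - u' 0) + norm (v 0 - v' 0))"
    using W_pos[of 0] by (intro mult_nonneg_nonneg) auto
  then show ?thesis using D[of 0] by linarith
qed

lemma estA:
  assumes t: "t \<le> 0"
    and D: "\<And>s. s \<le> 0 \<Longrightarrow> W s * (norm (u s - u' s) + norm (v s - v' s)) \<le> D"
    and h1: "((\<lambda>s. exp (Zint w t - Zint w s) *\<^sub>R (mexp ((t - s) *\<^sub>R A) *v dF u v s)) has_integral (P - U)) {t..0}"
    and h2: "((\<lambda>s. exp (Zint w t - Zint w s) *\<^sub>R (mexp ((t - s) *\<^sub>R A) *v dF u' v' s)) has_integral (P - U')) {t..0}"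
  shows "W t * norm (U - U') \<le> K / (a - \<eta>) * D"
proof -
  have D0: "0 \<le> D" by (rule D_nonneg[OF D])
  let ?F = "\<lambda>s. exp (Zint w t - Zint w s) *\<^sub>R (mexp ((t - s) *\<^sub>R A) *v dF u v s) - exp (Zint w t - Zint w s) *\<^sub>R (mexp ((t - s) *\<^sub>R A) *v dF u' v' s)"
  have hd: "(?F has_integral (U' - U)) {t..0}"
    using has_integral_diff[OF h1 h2] by simp
  define c where "c = K * D * exp (Zint w t + a * t)"
  define G where "G s = c * exp ((\<eta> - a) * s)" for s
  have hG: "(G has_integral c * ((1 - exp ((\<eta> - a) * t)) / (\<eta> - a))) {t..0}"
    unfolding G_def by (rule has_integral_mult_right[OF exp_int_seg]) (use eta t in auto)
  have bnd: "norm (?F s) \<le> G s" if s: "s \<in> {t..0}" for s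
  proof -
    have s0: "s \<le> 0" "t - s \<le> 0" using s by auto
    have "?F s = exp (Zint w t - Zint w s) *\<^sub>R (mexp ((t - s) *\<^sub>R A) *v (dF u v s - dF u' v' s))"
      by (simp add: matrix_vector_mult_diff_distrib scaleR_diff_right)
    then have "norm (?F s) = exp (Zint w t - Zint w s) * norm (mexp ((t - s) *\<^sub>R A) *v (dF u v s - dF u' v' s))"
      by simp
    also have "\<dots> \<le> exp (Zint w t - Zint w s) * (exp (a * (t - s)) * norm (dF u v s - dF u' v' s))"
      by (intro mult_left_mono A_dich s0) simp
    also have "\<dots> \<le> exp (Zint w t - Zint w s) * (exp (a * (t - s)) * (K * (D * exp (\<eta> * s + Zint w s))))"
      by (intro mult_left_mono order_trans[OF dF_lip] K0 Wb D s0) auto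
    also have "\<dots> = K * D * (exp (Zint w t - Zint w s) * exp (a * (t - s)) * exp (\<eta> * s + Zint w s))"
      by (simp only: mult_ac)
    also have "exp (Zint w t - Zint w s) * exp (a * (t - s)) * exp (\<eta> * s + Zint w s) = exp (Zint w t + a * t) * exp ((\<eta> - a) * s)"
      unfolding exp3 exp_add[symmetric] by (simp add: algebra_simps)
    finally show ?thesis by (simp add: G_def c_def mult_ac)
  qed
  have "norm (U' - U) \<le> c * ((1 - exp ((\<eta> - a) * t)) / (\<eta> - a))"
    using integral_norm_bound_integral[OF has_integral_integrable[OF hd] has_integral_integrable[OF hG] bnd]
    by (simp add: integral_unique[OF hd] integral_unique[OF hG])
  then have "W t * norm (U' - U) \<le> W t * (c * ((1 - exp ((\<eta> - a) * t)) / (\<eta> - a)))"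
    by (rule mult_left_mono[OF _ less_imp_le[OF W_pos]])
  then have "W t * norm (U - U') \<le> W t * (c * ((1 - exp ((\<eta> - a) * t)) / (\<eta> - a)))"
    by (simp only: norm_minus_commute)
  also have "W t * (c * ((1 - exp ((\<eta> - a) * t)) / (\<eta> - a))) = K * D * (1 - exp ((a - \<eta>) * t)) / (a - \<eta>)"
  proof -
    have e1: "W t * exp (Zint w t + a * t) = exp ((a - \<eta>) * t)"
      unfolding W_def exp_add[symmetric] by (simp add: algebra_simps)
    have e2: "exp ((a - \<eta>) * t) * exp ((\<eta> - a) * t) = 1"
      unfolding exp_add[symmetric] by (simp add: algebra_simps)
    have "W t * (c * ((1 - exp ((\<eta> - a) * t)) / (\<eta> - a))) = K * D * (W t * exp (Zint w t + a * t)) * (1 - exp ((\<eta> - a) * t)) / (\<eta> - a)"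
      by (simp add: c_def)
    also have "\<dots> = K * D * (exp ((a - \<eta>) * t) - exp ((a - \<eta>) * t) * exp ((\<eta> - a) * t)) / (\<eta> - a)"
      unfolding e1 by (simp add: algebra_simps)
    also have "\<dots> = K * D * (1 - exp ((a - \<eta>) * t)) / (a - \<eta>)"
      unfolding e2 using eta by (simp add: divide_simps) (simp add: algebra_simps)
    finally show ?thesis .
  qed
  also have "\<dots> \<le> K * D * 1 / (a - \<eta>)"
    using eta K0 D0 by (intro divide_right_mono mult_left_mono) auto
  finally show ?thesis by simp
qed

lemma estB:
  assumes t: "t \<le> 0"
    and D: "\<And>s. s \<le> 0 \<Longrightarrow> W s * (norm (u s - u' s) + norm (v s - v' s)) \<le> D"
    and h1: "((\<lambda>s. exp (Zint w t - Zint w s) *\<^sub>R (mexp ((t - s) *\<^sub>R B) *v dG u v s)) has_integral V) {..t}"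
    and h2: "((\<lambda>s. exp (Zint w t - Zint w s) *\<^sub>R (mexp ((t - s) *\<^sub>R B) *v dG u' v' s)) has_integral V') {..t}"
  shows "W t * norm (V - V') \<le> K / (\<eta> - b) * D"
proof -
  have D0: "0 \<le> D" by (rule D_nonneg[OF D])
  let ?F = "\<lambda>s. exp (Zint w t - Zint w s) *\<^sub>R (mexp ((t - s) *\<^sub>R B) *v dG u v s) - exp (Zint w t - Zint w s) *\<^sub>R (mexp ((t - s) *\<^sub>R B) *v dG u' v' s)"
  have hd: "(?F has_integral (V - V')) {..t}"
    using has_integral_diff[OF h1 h2] by simp
  define c where "c = K * D * exp (Zint w t + b * t)"
  define G where "G s = c * exp ((\<eta> - b) * s)" for s
  have hG: "(G has_integral c * (exp ((\<eta> - b) * t) / (\<eta> - b))) {..t}"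
    unfolding G_def by (rule has_integral_mult_right[OF exp_int_left]) (use eta in auto)
  have bnd: "norm (?F s) \<le> G s" if s: "s \<in> {..t}" for s
  proof -
    have s0: "s \<le> 0" "t - s \<ge> 0" using s t by auto
    have "?F s = exp (Zint w t - Zint w s) *\<^sub>R (mexp ((t - s) *\<^sub>R B) *v (dG u v s - dG u' v' s))"
      by (simp add: matrix_vector_mult_diff_distrib scaleR_diff_right)
    then have "norm (?F s) = exp (Zint w t - Zint w s) * norm (mexp ((t - s) *\<^sub>R B) *v (dG u v s - dG u' v' s))"
      by simp
    also have "\<dots> \<le> exp (Zint w t - Zint w s) * (exp (b * (t - s)) * norm (dG u v s - dG u' v' s))"
      by (intro mult_left_mono B_dich s0) simp
    also have "\<dots> \<le> exp (Zint w t - Zint w s) * (exp (b * (t - s)) * (K * (D * exp (\<eta> * s + Zint w s))))"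
      by (intro mult_left_mono order_trans[OF dG_lip] K0 Wb D s0) auto
    also have "\<dots> = K * D * (exp (Zint w t - Zint w s) * exp (b * (t - s)) * exp (\<eta> * s + Zint w s))"
      by (simp only: mult_ac)
    also have "exp (Zint w t - Zint w s) * exp (b * (t - s)) * exp (\<eta> * s + Zint w s) = exp (Zint w t + b * t) * exp ((\<eta> - b) * s)"
      unfolding exp3 exp_add[symmetric] by (simp add: algebra_simps)
    finally show ?thesis by (simp add: G_def c_def mult_ac)
  qed
  have "norm (V - V') \<le> c * (exp ((\<eta> - b) * t) / (\<eta> - b))"
    using integral_norm_bound_integral[OF has_integral_integrable[OF hd] has_integral_integrable[OF hG] bnd]
    by (simp add: integral_unique[OF hd] integral_unique[OF hG])
  then have "W t * norm (V - V') \<le> W t * (c * (exp ((\<eta> - b) * t) / (\<eta> - b)))"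
    by (rule mult_left_mono[OF _ less_imp_le[OF W_pos]])
  also have "W t * (c * (exp ((\<eta> - b) * t) / (\<eta> - b))) = K * D / (\<eta> - b)"
  proof -
    have e1: "W t * exp (Zint w t + b * t) * exp ((\<eta> - b) * t) = 1"
      unfolding W_def exp3 by (simp add: algebra_simps)
    have "W t * (c * (exp ((\<eta> - b) * t) / (\<eta> - b))) = K * D * (W t * exp (Zint w t + b * t) * exp ((\<eta> - b) * t)) / (\<eta> - b)"
      by (simp add: c_def)
    then show ?thesis unfolding e1 by simp
  qed
  finally show ?thesis by simp
qed

end

(* ---- Pic ---- *)


context L42 begin

definition "Nrm u v u' v' = (SUP s\<in>{..0}. W s * norm (u s - u' s)) + (SUP s\<in>{..0}. W s * norm (v s - v' s))"

lemma X_bdd: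
  assumes "in_Cminus \<eta> w u v" "in_Cminus \<eta> w u' v'"
  shows "bdd_above ((\<lambda>s. W s * norm (u s - u' s)) ` {..0})" "bdd_above ((\<lambda>s. W s * norm (v s - v' s)) ` {..0})"
proof -
  obtain Mu Mv where Mu: "\<And>s. s \<le> 0 \<Longrightarrow> W s * norm (u s) \<le> Mu" and Mv: "\<And>s. s \<le> 0 \<Longrightarrow> W s * norm (v s) \<le> Mv"
    using in_C_bounds[OF assms(1)] by blast
  obtain Mu' Mv' where Mu': "\<And>s. s \<le> 0 \<Longrightarrow> W s * norm (u' s) \<le> Mu'" and Mv': "\<And>s. s \<le> 0 \<Longrightarrow> W s * norm (v' s) \<le> Mv'"
    using in_C_bounds[OF assms(2)] by blast
  have "W s * norm (u s - u' s) \<le> Mu + Mu'" if "s \<le> 0" for s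
  proof -
    have "W s * norm (u s - u' s) \<le> W s * (norm (u s) + norm (u' s))"
      by (intro mult_left_mono norm_triangle_ineq4) (simp add: less_imp_le[OF W_pos])
    also have "\<dots> \<le> Mu + Mu'" using Mu[OF that] Mu'[OF that] by (simp add: distrib_left)
    finally show ?thesis .
  qed
  then show "bdd_above ((\<lambda>s. W s * norm (u s - u' s)) ` {..0})" by (intro bdd_aboveI2) auto
  have "W s * norm (v s - v' s) \<le> Mv + Mv'" if "s \<le> 0" for s
  proof -
    have "W s * norm (v s - v' s) \<le> W s * (norm (v s) + norm (v' s))"
      by (intro mult_left_mono norm_triangle_ineq4) (simp add: less_imp_le[OF W_pos])
    also have "\<dots> \<le> Mv + Mv'" using Mv[OF that] Mv'[OF that] by (simp add: distrib_left)
    finally show ?thesis .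
  qed
  then show "bdd_above ((\<lambda>s. W s * norm (v s - v' s)) ` {..0})" by (intro bdd_aboveI2) auto
qed

lemma Nrm_D:
  assumes "in_Cminus \<eta> w u v" "in_Cminus \<eta> w u' v'" "s \<le> 0"
  shows "W s * (norm (u s - u' s) + norm (v s - v' s)) \<le> Nrm u v u' v'"
proof -
  have "W s * norm (u s - u' s) \<le> (SUP s\<in>{..0}. W s * norm (u s - u' s))"
    by (rule cSUP_upper[OF _ X_bdd(1)[OF assms(1,2)]]) (use assms in auto)
  moreover have "W s * norm (v s - v' s) \<le> (SUP s\<in>{..0}. W s * norm (v s - v' s))"
    by (rule cSUP_upper[OF _ X_bdd(2)[OF assms(1,2)]]) (use assms in auto)
  ultimately show ?thesis unfolding Nrm_def by (simp add: distrib_left)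
qed

lemma Nrm_le:
  assumes "\<And>s. s \<le> 0 \<Longrightarrow> W s * norm (u s - u' s) \<le> C1" "\<And>s. s \<le> 0 \<Longrightarrow> W s * norm (v s - v' s) \<le> C2"
  shows "Nrm u v u' v' \<le> C1 + C2"
proof -
  have "(SUP s\<in>{..0::real}. W s * norm (u s - u' s)) \<le> C1" by (rule cSUP_least) (auto intro: assms)
  moreover have "(SUP s\<in>{..0::real}. W s * norm (v s - v' s)) \<le> C2" by (rule cSUP_least) (auto intro: assms)
  ultimately show ?thesis unfolding Nrm_def by simp
qed

lemma X_cont: "in_Cminus \<eta> w u v \<Longrightarrow> continuous_on {..0} u" "in_Cminus \<eta> w u v \<Longrightarrow> continuous_on {..0} v"
  by (auto simp: in_Cminus_def)

lemma T_contr: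
  assumes X1: "in_Cminus \<eta> w u v" and X2: "in_Cminus \<eta> w u' v'" and t: "t \<le> 0"
  shows "W t * norm (TU u0 u v t - TU u0 u' v' t) \<le> K / (a - \<eta>) * Nrm u v u' v'"
    and "W t * norm (TV u v t - TV u' v' t) \<le> K / (\<eta> - b) * Nrm u v u' v'"
  by (rule estA[OF t Nrm_D[OF X1 X2] TA[OF X_cont[OF X1] t] TA[OF X_cont[OF X2] t]], assumption)
     (rule estB[OF t Nrm_D[OF X1 X2] TB[OF X1 t] TB[OF X2 t]], assumption)

lemma X0: "in_Cminus \<eta> w (\<lambda>_. 0) (\<lambda>_. 0)"
  unfolding in_Cminus_def by (auto simp: continuous_on_const intro!: bdd_aboveI2[where M=0])

lemma dF0: "dF (\<lambda>_. 0) (\<lambda>_. 0) s = 0" by (simp add: dF_def)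
lemma dG0: "dG (\<lambda>_. 0) (\<lambda>_. 0) s = 0" by (simp add: dG_def)

lemma TU0: "TU u0 (\<lambda>_. 0) (\<lambda>_. 0) t = exp (Zint w t) *\<^sub>R (mexp (t *\<^sub>R A) *v u0)"
proof -
  have "gA (\<lambda>_. 0) (\<lambda>_. 0) = (\<lambda>_. 0)" by (rule ext) (simp add: gA_def dF0)
  then show ?thesis by (simp add: TU_def)
qed

lemma TV0: "TV (\<lambda>_. 0) (\<lambda>_. 0) t = 0"
proof -
  have "gB (\<lambda>_. 0) (\<lambda>_. 0) = (\<lambda>_. 0)" by (rule ext) (simp add: gB_def dG0)
  then show ?thesis by (simp add: TV_def)
qed

lemma T_X:
  assumes X: "in_Cminus \<eta> w u v"
  shows "in_Cminus \<eta> w (TU u0 u v) (TV u v)"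
proof -
  let ?N = "Nrm u v (\<lambda>_. 0) (\<lambda>_. 0)"
  have bu: "W t * norm (TU u0 u v t) \<le> K / (a - \<eta>) * ?N + norm u0" if t: "t \<le> 0" for t
  proof -
    have tri: "W t * norm (TU u0 u v t) \<le> W t * norm (TU u0 u v t - TU u0 (\<lambda>_. 0) (\<lambda>_. 0) t) + W t * norm (TU u0 (\<lambda>_. 0) (\<lambda>_. 0) t)"
      unfolding distrib_left[symmetric]
      by (rule mult_left_mono[OF _ less_imp_le[OF W_pos]]) (metis add.commute norm_triangle_sub)
    have ew: "W t * exp (Zint w t) = exp (- \<eta> * t)" unfolding W_def exp_add[symmetric] by simp
    have ee: "exp ((a - \<eta>) * t) = exp (- \<eta> * t) * exp (a * t)" unfolding exp_add[symmetric] by (simp add: algebra_simps)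
    have "W t * norm (TU u0 (\<lambda>_. 0) (\<lambda>_. 0) t) = W t * exp (Zint w t) * norm (mexp (t *\<^sub>R A) *v u0)"
      unfolding TU0 by (simp add: mult.assoc)
    also have "\<dots> \<le> exp (- \<eta> * t) * (exp (a * t) * norm u0)"
      unfolding ew by (intro mult_left_mono A_dich t) simp
    also have "\<dots> = exp ((a - \<eta>) * t) * norm u0" by (simp only: ee mult.assoc)
    also have "\<dots> \<le> 1 * norm u0"
      using eta t by (intro mult_right_mono) (auto simp: mult_nonneg_nonpos)
    finally have c0: "W t * norm (TU u0 (\<lambda>_. 0) (\<lambda>_. 0) t) \<le> norm u0" by simp
    show ?thesis using tri c0 T_contr(1)[OF X X0 t, of u0] by linarith
  qed
  have bv: "W t * norm (TV u v t) \<le> K / (\<eta> - b) * ?N" if t: "t \<le> 0" for t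
    using T_contr(2)[OF X X0 t] by (simp add: TV0)
  show ?thesis
    unfolding in_Cminus_def W_def[symmetric]
    using TU_cont[OF X_cont[OF X]] TV_cont[OF X] bu bv
    by (auto intro!: bdd_aboveI2)
qed

end

(* ---- Pic2 ---- *)


context L42 begin

definition "rr = K / (a - \<eta>) + K / (\<eta> - b)"

lemma rr: "0 \<le> rr" "rr < 1"
  using rho K0 eta unfolding rr_def by auto

lemma geo_zero:
  assumes "\<And>k. x \<le> C * rr ^ k"
  shows "x \<le> (0::real)"
proof -
  have "(\<lambda>k. C * rr ^ k) \<longlonglongrightarrow> C * 0"
    by (intro tendsto_mult tendsto_const LIMSEQ_power_zero) (use rr in auto)
  then have "(\<lambda>k. C * rr ^ k) \<longlonglongrightarrow> 0" by simp
  then show ?thesis by (rule LIMSEQ_le_const) (use assms in auto)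
qed

lemma limit_component:
  fixes F :: "nat \<Rightarrow> real \<Rightarrow> 'c::euclidean_space"
  assumes st: "\<And>k s. s \<le> 0 \<Longrightarrow> W s * norm (F (Suc k) s - F k s) \<le> d0 * rr ^ k"
    and cont: "\<And>k. continuous_on {..0} (F k)" and F0: "\<And>s. F 0 s = 0" and d0: "0 \<le> d0"
  shows "\<exists>l. continuous_on {..0} l \<and> (\<forall>k s. s \<le> 0 \<longrightarrow> W s * norm (l s - F k s) \<le> d0 * rr ^ k / (1 - rr))
           \<and> bdd_above ((\<lambda>s. W s * norm (l s)) ` {..0})"
proof -
  have r1: "1 - rr > 0" using rr by simp
  have cb: "W s * norm (F m s - F k s) \<le> d0 * (rr ^ k - rr ^ m) / (1 - rr)" if "k \<le> m" "s \<le> 0" for k m s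
    using that(1)
  proof (induction m rule: dec_induct)
    case base then show ?case by simp
  next
    case (step m)
    have "W s * norm (F (Suc m) s - F k s) \<le> W s * norm (F (Suc m) s - F m s) + W s * norm (F m s - F k s)"
      unfolding distrib_left[symmetric]
      by (rule mult_left_mono[OF _ less_imp_le[OF W_pos]]) (metis diff_add_cancel norm_triangle_ineq add_diff_eq)
    also have "\<dots> \<le> d0 * rr ^ m + d0 * (rr ^ k - rr ^ m) / (1 - rr)"
      using step.IH st[OF that(2), of m] by linarith
    also have "\<dots> = d0 * (rr ^ k - rr ^ Suc m) / (1 - rr)"
      using r1 by (simp add: field_simps)
    finally show ?case .
  qed
  have cb2: "W s * norm (F m s - F k s) \<le> d0 * rr ^ k / (1 - rr)" if "k \<le> m" "s \<le> 0" for k m s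
  proof -
    have "d0 * (rr ^ k - rr ^ m) / (1 - rr) \<le> d0 * rr ^ k / (1 - rr)"
      using r1 d0 rr by (intro divide_right_mono mult_left_mono) auto
    then show ?thesis using cb[OF that] by linarith
  qed
  have Rlim: "(\<lambda>k. C * rr ^ k) \<longlonglongrightarrow> 0" for C
    using tendsto_mult[OF tendsto_const LIMSEQ_power_zero, of rr C] rr by simp
  have conv: "(\<lambda>k. F k s) \<longlonglongrightarrow> lim (\<lambda>k. F k s)" if s: "s \<le> 0" for s
  proof -
    have "Cauchy (\<lambda>k. F k s)"
    proof (rule metric_CauchyI)
      fix e :: real assume e: "e > 0"
      define C where "C = d0 / (1 - rr) / W s"
      have "\<forall>\<^sub>F k in sequentially. C * rr ^ k < e" by (rule order_tendstoD(2)[OF Rlim e])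
      then obtain M where M: "\<And>k. k \<ge> M \<Longrightarrow> C * rr ^ k < e" unfolding eventually_sequentially by blast
      have d: "dist (F m s) (F n s) \<le> C * rr ^ n" if "n \<le> m" for m n
      proof -
        have "W s * norm (F m s - F n s) \<le> d0 * rr ^ n / (1 - rr)" by (rule cb2[OF that s])
        then have "norm (F m s - F n s) \<le> d0 * rr ^ n / (1 - rr) / W s"
          by (subst pos_le_divide_eq[OF W_pos]) (metis mult.commute)
        then show ?thesis by (simp add: C_def dist_norm field_simps)
      qed
      have "dist (F m s) (F n s) < e" if "m \<ge> M" "n \<ge> M" for m n
      proof (cases "n \<le> m")
        case True then show ?thesis using d[OF True] M[OF that(2)] by linarith
      next
        case False
        then have "dist (F n s) (F m s) \<le> C * rr ^ m" using d by auto
        then show ?thesis using M[OF that(1)] by (simp add: dist_commute)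
      qed
      then show "\<exists>M. \<forall>m\<ge>M. \<forall>n\<ge>M. dist (F m s) (F n s) < e" by blast
    qed
    then show ?thesis by (simp add: Cauchy_convergent_iff convergent_LIMSEQ_iff)
  qed
  define l where "l s = lim (\<lambda>k. F k s)" for s
  have lb: "W s * norm (l s - F k s) \<le> d0 * rr ^ k / (1 - rr)" if s: "s \<le> 0" for k s
  proof (rule LIMSEQ_le_const2)
    show "(\<lambda>m. W s * norm (F m s - F k s)) \<longlonglongrightarrow> W s * norm (l s - F k s)"
      unfolding l_def by (intro tendsto_intros conv s)
    show "\<exists>N. \<forall>m\<ge>N. W s * norm (F m s - F k s) \<le> d0 * rr ^ k / (1 - rr)"
      using cb2 s by blast
  qed
  have ul: "uniform_limit {..0} (\<lambda>k s. W s *\<^sub>R F k s) (\<lambda>s. W s *\<^sub>R l s) sequentially"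
    unfolding uniform_limit_iff
  proof (intro allI impI)
    fix e :: real assume e: "e > 0"
    have "\<forall>\<^sub>F k in sequentially. (d0 / (1 - rr)) * rr ^ k < e" by (rule order_tendstoD(2)[OF Rlim e])
    then show "\<forall>\<^sub>F k in sequentially. \<forall>s\<in>{..0}. dist (W s *\<^sub>R F k s) (W s *\<^sub>R l s) < e"
    proof (rule eventually_mono)
      fix k assume k: "d0 / (1 - rr) * rr ^ k < e"
      show "\<forall>s\<in>{..0}. dist (W s *\<^sub>R F k s) (W s *\<^sub>R l s) < e"
      proof
        fix s :: real assume "s \<in> {..0}"
        then have "W s * norm (l s - F k s) \<le> d0 * rr ^ k / (1 - rr)" using lb by auto
        moreover have "dist (W s *\<^sub>R F k s) (W s *\<^sub>R l s) = W s * norm (l s - F k s)"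
          using W_pos[of s] by (simp add: dist_norm scaleR_diff_right[symmetric] norm_minus_commute)
        ultimately show "dist (W s *\<^sub>R F k s) (W s *\<^sub>R l s) < e" using k by simp
      qed
    qed
  qed
  have cW: "continuous_on {..0} (\<lambda>s. W s *\<^sub>R l s)"
    by (rule uniform_limit_theorem[OF _ ul]) (auto intro!: always_eventually continuous_on_scaleR W_cont cont)
  have cl: "continuous_on {..0} l"
  proof -
    have "continuous_on {..0} (\<lambda>s. inverse (W s) *\<^sub>R (W s *\<^sub>R l s))"
    proof (rule continuous_on_scaleR[OF _ cW])
      show "continuous_on {..0} (\<lambda>s. inverse (W s))"
        by (rule continuous_on_inverse[OF W_cont]) (metis W_pos less_irrefl)
    qed
    moreover have "inverse (W s) *\<^sub>R (W s *\<^sub>R l s) = l s" for s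
      using W_pos[of s] by (simp add: less_imp_neq[symmetric])
    ultimately show ?thesis by (rule continuous_on_eq)
  qed
  have "W s * norm (l s) \<le> d0 / (1 - rr)" if "s \<in> {..0}" for s
    using lb[of s 0] that by (simp add: F0)
  then have "bdd_above ((\<lambda>s. W s * norm (l s)) ` {..0})" by (intro bdd_aboveI2) auto
  then show ?thesis using cl lb by blast
qed

end

(* ---- Pic3 ---- *)


context L42 begin

definition "Tm u0 p = (TU u0 (fst p) (snd p), TV (fst p) (snd p))"
definition "it u0 k = (Tm u0 ^^ k) (\<lambda>_. 0, \<lambda>_. 0)"

lemma it_Suc: "it u0 (Suc k) = Tm u0 (it u0 k)" by (simp add: it_def)

lemma it_fst: "fst (it u0 (Suc k)) = TU u0 (fst (it u0 k)) (snd (it u0 k))"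
  by (simp add: it_Suc Tm_def)
lemma it_snd: "snd (it u0 (Suc k)) = TV (fst (it u0 k)) (snd (it u0 k))"
  by (simp add: it_Suc Tm_def)

lemma tri3: "norm (x - z) \<le> norm (x - y) + norm (y - (z::'c::real_normed_vector))"
  using norm_triangle_ineq[of "x - y" "y - z"] by simp

lemma Wtri3: "W s * norm (x - z) \<le> W s * norm (x - y) + W s * norm (y - (z::'c::real_normed_vector))"
  unfolding distrib_left[symmetric] by (rule mult_left_mono[OF tri3 less_imp_le[OF W_pos]])

lemma it_X: "in_Cminus \<eta> w (fst (it u0 k)) (snd (it u0 k))"
proof (induction k)
  case 0 then show ?case by (simp add: it_def X0)
next
  case (Suc k) then show ?case by (simp add: it_Suc Tm_def T_X)
qed

definition "dd u0 k = Nrm (fst (it u0 (Suc k))) (snd (it u0 (Suc k))) (fst (it u0 k)) (snd (it u0 k))"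

lemma dd_nonneg: "0 \<le> dd u0 k"
  unfolding dd_def by (rule D_nonneg[OF Nrm_D[OF it_X it_X]])

lemma dd_step: "dd u0 (Suc k) \<le> rr * dd u0 k"
proof -
  have "dd u0 (Suc k) \<le> K / (a - \<eta>) * dd u0 k + K / (\<eta> - b) * dd u0 k"
    unfolding dd_def
  proof (rule Nrm_le)
    fix s :: real assume s: "s \<le> 0"
    show "W s * norm (fst (it u0 (Suc (Suc k))) s - fst (it u0 (Suc k)) s) \<le> K / (a - \<eta>) * Nrm (fst (it u0 (Suc k))) (snd (it u0 (Suc k))) (fst (it u0 k)) (snd (it u0 k))"
      using T_contr(1)[OF it_X[of u0 "Suc k"] it_X[of u0 k] s, of u0] by (simp only: it_fst it_snd)
    show "W s * norm (snd (it u0 (Suc (Suc k))) s - snd (it u0 (Suc k)) s) \<le> K / (\<eta> - b) * Nrm (fst (it u0 (Suc k))) (snd (it u0 (Suc k))) (fst (it u0 k)) (snd (it u0 k))"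
      using T_contr(2)[OF it_X[of u0 "Suc k"] it_X[of u0 k] s] by (simp only: it_fst it_snd)
  qed
  then show ?thesis by (simp add: rr_def distrib_right)
qed

lemma dd_bound: "dd u0 k \<le> dd u0 0 * rr ^ k"
proof (induction k)
  case 0 then show ?case by simp
next
  case (Suc k)
  have "dd u0 (Suc k) \<le> rr * dd u0 k" by (rule dd_step)
  also have "\<dots> \<le> rr * (dd u0 0 * rr ^ k)" by (rule mult_left_mono[OF Suc]) (use rr in auto)
  finally show ?case by (simp add: mult_ac)
qed

lemma it_step:
  assumes s: "s \<le> 0"
  shows "W s * norm (fst (it u0 (Suc k)) s - fst (it u0 k) s) \<le> dd u0 0 * rr ^ k"
    and "W s * norm (snd (it u0 (Suc k)) s - snd (it u0 k) s) \<le> dd u0 0 * rr ^ k"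
proof -
  have h: "W s * (norm (fst (it u0 (Suc k)) s - fst (it u0 k) s) + norm (snd (it u0 (Suc k)) s - snd (it u0 k) s)) \<le> dd u0 k"
    unfolding dd_def by (rule Nrm_D[OF it_X it_X s])
  have p: "0 \<le> W s * norm (fst (it u0 (Suc k)) s - fst (it u0 k) s)" "0 \<le> W s * norm (snd (it u0 (Suc k)) s - snd (it u0 k) s)"
    using W_pos[of s] by auto
  show "W s * norm (fst (it u0 (Suc k)) s - fst (it u0 k) s) \<le> dd u0 0 * rr ^ k"
    using h p dd_bound[of u0 k] by (simp add: distrib_left)
  show "W s * norm (snd (it u0 (Suc k)) s - snd (it u0 k) s) \<le> dd u0 0 * rr ^ k"
    using h p dd_bound[of u0 k] by (simp add: distrib_left)
qed

lemma existence: "\<exists>u v. in_Cminus \<eta> w u v \<and> solves_lemma_system A B f g w xh yh u0 u v"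
proof -
  let ?d = "dd u0 0"
  obtain u where uc: "continuous_on {..0} u" and ub: "\<And>k s. s \<le> 0 \<Longrightarrow> W s * norm (u s - fst (it u0 k) s) \<le> ?d * rr ^ k / (1 - rr)"
    and ubd: "bdd_above ((\<lambda>s. W s * norm (u s)) ` {..0})"
    using limit_component[of "\<lambda>k. fst (it u0 k)" ?d, OF it_step(1) X_cont(1)[OF it_X] _ dd_nonneg]
    by (simp add: it_def) blast
  obtain v where vc: "continuous_on {..0} v" and vb: "\<And>k s. s \<le> 0 \<Longrightarrow> W s * norm (v s - snd (it u0 k) s) \<le> ?d * rr ^ k / (1 - rr)"
    and vbd: "bdd_above ((\<lambda>s. W s * norm (v s)) ` {..0})"
    using limit_component[of "\<lambda>k. snd (it u0 k)" ?d, OF it_step(2) X_cont(2)[OF it_X] _ dd_nonneg]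
    by (simp add: it_def) blast
  have X: "in_Cminus \<eta> w u v"
    using uc vc ubd vbd unfolding in_Cminus_def W_def by auto
  define R where "R k = ?d * rr ^ k / (1 - rr)" for k
  have R: "R (Suc k) \<le> R k" "0 \<le> R k" for k
    using rr dd_nonneg[of u0 0] unfolding R_def
    by (auto intro!: divide_right_mono mult_left_mono power_decreasing simp del: power_Suc)
  have NR: "Nrm u v (fst (it u0 k)) (snd (it u0 k)) \<le> R k + R k" for k
    by (rule Nrm_le) (auto simp: R_def intro: ub vb)
  have Rk: "R k = (?d / (1 - rr)) * rr ^ k" for k by (simp add: R_def)
  have fixu: "TU u0 u v s = u s" if s: "s \<le> 0" for s
  proof -
    have "W s * norm (TU u0 u v s - u s) \<le> ((2 * (K / (a - \<eta>)) + 1) * (?d / (1 - rr))) * rr ^ k" for k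
    proof -
      have t1: "W s * norm (TU u0 u v s - u s) \<le> W s * norm (TU u0 u v s - fst (it u0 (Suc k)) s) + W s * norm (fst (it u0 (Suc k)) s - u s)"
        by (rule Wtri3)
      have "W s * norm (TU u0 u v s - fst (it u0 (Suc k)) s) \<le> K / (a - \<eta>) * Nrm u v (fst (it u0 k)) (snd (it u0 k))"
        using T_contr(1)[OF X it_X[of u0 k] s, of u0] by (simp only: it_fst)
      also have "\<dots> \<le> K / (a - \<eta>) * (R k + R k)"
        by (rule mult_left_mono[OF NR]) (use K0 eta in auto)
      finally have t2: "W s * norm (TU u0 u v s - fst (it u0 (Suc k)) s) \<le> K / (a - \<eta>) * (R k + R k)" .
      have t3: "W s * norm (fst (it u0 (Suc k)) s - u s) \<le> R k"
        using ub[OF s, of "Suc k"] R(1)[of k] by (simp add: norm_minus_commute R_def)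
      have "W s * norm (TU u0 u v s - u s) \<le> (2 * (K / (a - \<eta>)) + 1) * R k"
      proof -
        have "(2 * (K / (a - \<eta>)) + 1) * R k = K / (a - \<eta>) * (R k + R k) + R k" by (simp add: algebra_simps)
        then show ?thesis using t1 t2 t3 by linarith
      qed
      then show ?thesis unfolding Rk by (simp only: mult.assoc)
    qed
    then have "W s * norm (TU u0 u v s - u s) \<le> 0" by (rule geo_zero)
    then show ?thesis using W_pos[of s] by (simp add: mult_le_0_iff)
  qed
  have fixv: "TV u v s = v s" if s: "s \<le> 0" for s
  proof -
    have "W s * norm (TV u v s - v s) \<le> ((2 * (K / (\<eta> - b)) + 1) * (?d / (1 - rr))) * rr ^ k" for k
    proof -
      have t1: "W s * norm (TV u v s - v s) \<le> W s * norm (TV u v s - snd (it u0 (Suc k)) s) + W s * norm (snd (it u0 (Suc k)) s - v s)"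
        by (rule Wtri3)
      have "W s * norm (TV u v s - snd (it u0 (Suc k)) s) \<le> K / (\<eta> - b) * Nrm u v (fst (it u0 k)) (snd (it u0 k))"
        using T_contr(2)[OF X it_X[of u0 k] s] by (simp only: it_snd)
      also have "\<dots> \<le> K / (\<eta> - b) * (R k + R k)"
        by (rule mult_left_mono[OF NR]) (use K0 eta in auto)
      finally have t2: "W s * norm (TV u v s - snd (it u0 (Suc k)) s) \<le> K / (\<eta> - b) * (R k + R k)" .
      have t3: "W s * norm (snd (it u0 (Suc k)) s - v s) \<le> R k"
        using vb[OF s, of "Suc k"] R(1)[of k] by (simp add: norm_minus_commute R_def)
      have "W s * norm (TV u v s - v s) \<le> (2 * (K / (\<eta> - b)) + 1) * R k"
      proof -
        have "(2 * (K / (\<eta> - b)) + 1) * R k = K / (\<eta> - b) * (R k + R k) + R k" by (simp add: algebra_simps)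
        then show ?thesis using t1 t2 t3 by linarith
      qed
      then show ?thesis unfolding Rk by (simp only: mult.assoc)
    qed
    then have "W s * norm (TV u v s - v s) \<le> 0" by (rule geo_zero)
    then show ?thesis using W_pos[of s] by (simp add: mult_le_0_iff)
  qed
  have "solves_lemma_system A B f g w xh yh u0 u v"
    unfolding solves_lemma_system_def Let_def
  proof (intro allI impI conjI)
    fix t :: real assume t: "t \<le> 0"
    show "((\<lambda>s. exp (Zint w t - Zint w s) *\<^sub>R (mexp ((t - s) *\<^sub>R A) *v
             (Ftr f (u s + xh s) (v s + yh s) (theta s w) - Ftr f (xh s) (yh s) (theta s w))))
          has_integral exp (Zint w t) *\<^sub>R (mexp (t *\<^sub>R A) *v u0) - u t) {t..0}"
      using TA[OF uc vc t, of u0] unfolding dF_def fixu[OF t] .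
    show "((\<lambda>s. exp (Zint w t - Zint w s) *\<^sub>R (mexp ((t - s) *\<^sub>R B) *v
             (Ftr g (u s + xh s) (v s + yh s) (theta s w) - Ftr g (xh s) (yh s) (theta s w))))
          has_integral v t) {..t}"
      using TB[OF X t] unfolding dG_def fixv[OF t] .
  qed
  then show ?thesis using X by blast
qed

lemma uniqueness:
  assumes X1: "in_Cminus \<eta> w u v" and S1: "solves_lemma_system A B f g w xh yh u0 u v"
    and X2: "in_Cminus \<eta> w u' v'" and S2: "solves_lemma_system A B f g w xh yh u0 u' v'"
    and t: "t \<le> 0"
  shows "u t = u' t \<and> v t = v' t"
proof -
  let ?N = "Nrm u v u' v'"
  have D: "\<And>s. s \<le> 0 \<Longrightarrow> W s * (norm (u s - u' s) + norm (v s - v' s)) \<le> ?N" by (rule Nrm_D[OF X1 X2])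
  have eu: "W s * norm (u s - u' s) \<le> K / (a - \<eta>) * ?N" if s: "s \<le> 0" for s
    using S1 S2 s unfolding solves_lemma_system_def Let_def dF_def[symmetric] dG_def[symmetric]
    by (intro estA[OF s D]) auto
  have ev: "W s * norm (v s - v' s) \<le> K / (\<eta> - b) * ?N" if s: "s \<le> 0" for s
    using S1 S2 s unfolding solves_lemma_system_def Let_def dF_def[symmetric] dG_def[symmetric]
    by (intro estB[OF s D]) auto
  have "?N \<le> K / (a - \<eta>) * ?N + K / (\<eta> - b) * ?N" by (rule Nrm_le[OF eu ev])
  then have "?N \<le> rr * ?N" by (simp add: rr_def distrib_right)
  moreover have "0 \<le> ?N" by (rule D_nonneg[OF D])
  ultimately have N0: "?N = 0" using rr
    by (metis antisym less_le_not_le mult_le_cancel_right1 not_le)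
  have "W t * norm (u t - u' t) \<le> 0" "W t * norm (v t - v' t) \<le> 0"
    using eu[OF t] ev[OF t] N0 by auto
  then show ?thesis using W_pos[of t] by (simp add: mult_le_0_iff)
qed

end


theorem lemma4p2:
  fixes A :: "real^'n^'n" and B :: "real^'m^'m"
    and f :: "real^'n \<Rightarrow> real^'m \<Rightarrow> real^'n" and g :: "real^'n \<Rightarrow> real^'m \<Rightarrow> real^'m"
    and a b K \<eta> :: real and w :: "real \<Rightarrow> real"
    and xh0 :: "real^'n" and yh0 :: "real^'m"
    and xh :: "real \<Rightarrow> real^'n" and yh :: "real \<Rightarrow> real^'m"
  assumes ba: "b < 0" "0 < a"
    and A_dich: "\<And>t x. t \<le> 0 \<Longrightarrow> norm (mexp (t *\<^sub>R A) *v x) \<le> exp (a * t) * norm x"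
    and B_dich: "\<And>t y. t \<ge> 0 \<Longrightarrow> norm (mexp (t *\<^sub>R B) *v y) \<le> exp (b * t) * norm y"
    and f0: "f 0 0 = 0" and g0: "g 0 0 = 0"
    and f_lip: "\<And>x1 y1 x2 y2. norm (f x1 y1 - f x2 y2) \<le> K * (norm (x1 - x2) + norm (y1 - y2))"
    and g_lip: "\<And>x1 y1 x2 y2. norm (g x1 y1 - g x2 y2) \<le> K * (norm (x1 - x2) + norm (y1 - y2))"
    and Omega: "in_Omega w"
    and orbit: "rde_solution A B f g w xh yh" "xh 0 = xh0" "yh 0 = yh0"
    and eta: "\<eta> > 0" "b < \<eta>" "\<eta> < a"
    and rho: "K / (a - \<eta>) + K / (\<eta> - b) < 1"
  shows "\<forall>u0. (\<exists>u v. in_Cminus \<eta> w u v \<and> solves_lemma_system A B f g w xh yh u0 u v) \<and>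
           (\<forall>u v u' v'. in_Cminus \<eta> w u v \<and> solves_lemma_system A B f g w xh yh u0 u v \<and>
                        in_Cminus \<eta> w u' v' \<and> solves_lemma_system A B f g w xh yh u0 u' v'
                        \<longrightarrow> (\<forall>t\<le>0. u t = u' t \<and> v t = v' t))"
proof -
  have K0: "0 \<le> K"
  proof -
    have "norm (f (axis undefined 1) 0 - f 0 0) \<le> K * (norm ((axis undefined 1 :: real^'n) - 0) + norm ((0::real^'m) - 0))"
      by (rule f_lip)
    then have "norm (f (axis undefined 1) 0 - f 0 0) \<le> K" by (simp add: norm_axis_1)
    then show ?thesis by (rule order_trans[OF norm_ge_zero])
  qed
  have cad: "cadlag (\<lambda>t. zv (theta t w))" using Omega by (simp add: in_Omega_def)
  have xc: "continuous_on UNIV xh" and yc: "continuous_on UNIV yh"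
    using orbit(1) by (simp_all add: rde_solution_def)
  interpret L: L42 A B f g a b K \<eta> w xh yh
    by (rule L42.intro) (use ba A_dich B_dich f_lip g_lip cad xc yc eta rho K0 in auto)
  show ?thesis using L.existence L.uniqueness by blast
qed

end
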